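(* Let $M$ be an exact $\mathfrak{K}$-module. Assume that one of the pieces $M_0$, $M_1$ or $M_2$ is uniquely $p$-divisible. Then the other two pieces are uniquely $p$-divisible as well. And there are a $\mathbb{Z}/2$-graded $\mathbb{Z}[1/p]$-module $X$ and $\mathbb{Z}/2$-graded $\mathbb{Z}[\vartheta,1/p]$-modules $Y,Z$ such that $M$ is isomorphic to the exact $\mathfrak{K}$-module $E(X,Y,Z)$.
   Context: Fix a prime $p$, $N(x)=1+x+\dots+x^{p-1}$, and $\vartheta$ a primitive $p$-th root of unity. A $\mathfrak{K}$-module $M$ amounts to $\mathbb{Z}/2$-graded abelian groups $M_0,M_1,M_2$ with homomorphisms $\alpha_{jk}\colon M_k\to M_j$ ($j\neq k$; $\alpha_{12},\alpha_{21}$ grading-reversing, others grading-preserving) with $\alpha_{jk}\alpha_{km}=0$ for $\{j,k,m\}=\{0,1,2\}$ and, for $t_0:=1-\alpha_{02}\alpha_{20}$, $s_1:=1-\alpha_{12}\alpha_{21}$, $t_2:=1-\alpha_{20}\alpha_{02}$, $s_2:=1-\alpha_{21}\alpha_{12}$: $\alpha_{01}\alpha_{10}=N(t_0)$, $\alpha_{10}\alpha_{01}=N(s_1)$, $N(t_2)+N(s_2)=p$. Morphisms are triples of grading-preserving maps commuting with all $\alpha_{jk}$. $M$ is exact if the cyclic sequences $M_0\xrightarrow{\alpha_{10}}M_1\xrightarrow{\alpha_{21}}M_2\xrightarrow{\alpha_{02}}M_0$ and $M_0\xrightarrow{\alpha_{20}}M_2\xrightarrow{\alpha_{12}}M_1\xrightarrow{\alpha_{01}}M_0$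 are exact. Uniquely $p$-divisible: multiplication by $p$ bijective. For $X,Y,Z$ as in the claim, $E(X,Y,Z)$ is the exact $\mathfrak{K}$-module with $M_0=X\oplus Y$, $M_1=X\oplus Z$, $M_2=Y\oplus\Sigma Z$ ($\Sigma Z$ is $Z$ with opposite parity), $\alpha_{01}(x,z)=(x,0)$, $\alpha_{10}(x,y)=(px,0)$, $\alpha_{12}(y,z)=(0,(1-\vartheta)z)$, $\alpha_{21}(x,z)=(0,z)$, $\alpha_{20}(x,y)=(y,0)$, $\alpha_{02}(y,z)=(0,(1-\vartheta)y)$. *)

theory Defs
  imports "HOL-Algebra.Group" "HOL-Algebra.FiniteProduct" "HOL-Computational_Algebra.Primes"
begin

text \<open>Abelian groups are HOL-Algebra commutative groups (multiplicative notation: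
  the group law written additively in the paper is \<open>\<otimes>\<close>, \<open>0\<close> is \<open>\<one>\<close>, \<open>n x\<close> is \<open>x [^] n\<close>).\<close>

record 'a gmonoid = "'a monoid" +
  ev_part :: "'a set"
  od_part :: "'a set"

definition graded_group :: "('a, 'm) gmonoid_scheme \<Rightarrow> bool" where
  "graded_group G \<longleftrightarrow> comm_group G \<and> subgroup (ev_part G) G \<and> subgroup (od_part G) G \<and>
     (\<forall>x\<in>carrier G. \<exists>!ab. fst ab \<in> ev_part G \<and> snd ab \<in> od_part G \<and> x = fst ab \<otimes>\<^bsub>G\<^esub> snd ab)"

definition gpres :: "('a, 'm) gmonoid_scheme \<Rightarrow> ('b, 'n) gmonoid_scheme \<Rightarrow> ('a \<Rightarrow> 'b) \<Rightarrow> bool" where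
  "gpres G H f \<longleftrightarrow> f \<in> hom G H \<and> f ` ev_part G \<subseteq> ev_part H \<and> f ` od_part G \<subseteq> od_part H"

definition grev :: "('a, 'm) gmonoid_scheme \<Rightarrow> ('b, 'n) gmonoid_scheme \<Rightarrow> ('a \<Rightarrow> 'b) \<Rightarrow> bool" where
  "grev G H f \<longleftrightarrow> f \<in> hom G H \<and> f ` ev_part G \<subseteq> od_part H \<and> f ` od_part G \<subseteq> ev_part H"

definition one_minus :: "('a, 'm) monoid_scheme \<Rightarrow> ('a \<Rightarrow> 'a) \<Rightarrow> 'a \<Rightarrow> 'a" where
  "one_minus G f = (\<lambda>x. x \<otimes>\<^bsub>G\<^esub> inv\<^bsub>G\<^esub> (f x))"

definition normop :: "nat \<Rightarrow> ('a, 'm) monoid_scheme \<Rightarrow> ('a \<Rightarrow> 'a) \<Rightarrow> 'a \<Rightarrow> 'a" where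
  "normop p G f = (\<lambda>x. finprod G (\<lambda>i. (f ^^ i) x) {..<p})"

definition upd :: "nat \<Rightarrow> ('a, 'm) monoid_scheme \<Rightarrow> bool" where
  "upd p G \<longleftrightarrow> bij_betw (\<lambda>x. x [^]\<^bsub>G\<^esub> p) (carrier G) (carrier G)"

record ('a, 'b, 'c) kmod =
  M0 :: "'a gmonoid"
  M1 :: "'b gmonoid"
  M2 :: "'c gmonoid"
  a01 :: "'b \<Rightarrow> 'a"
  a10 :: "'a \<Rightarrow> 'b"
  a12 :: "'c \<Rightarrow> 'b"
  a21 :: "'b \<Rightarrow> 'c"
  a02 :: "'c \<Rightarrow> 'a"
  a20 :: "'a \<Rightarrow> 'c"

definition kmodule :: "nat \<Rightarrow> ('a, 'b, 'c) kmod \<Rightarrow> bool" where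
  "kmodule p M \<longleftrightarrow>
     graded_group (M0 M) \<and> graded_group (M1 M) \<and> graded_group (M2 M) \<and>
     gpres (M1 M) (M0 M) (a01 M) \<and> gpres (M0 M) (M1 M) (a10 M) \<and>
     grev (M2 M) (M1 M) (a12 M) \<and> grev (M1 M) (M2 M) (a21 M) \<and>
     gpres (M2 M) (M0 M) (a02 M) \<and> gpres (M0 M) (M2 M) (a20 M) \<and>
     (\<forall>x\<in>carrier (M2 M). a01 M (a12 M x) = \<one>\<^bsub>M0 M\<^esub>) \<and>
     (\<forall>x\<in>carrier (M1 M). a02 M (a21 M x) = \<one>\<^bsub>M0 M\<^esub>) \<and>
     (\<forall>x\<in>carrier (M2 M). a10 M (a02 M x) = \<one>\<^bsub>M1 M\<^esub>) \<and>
     (\<forall>x\<in>carrier (M0 M). a12 M (a20 M x) = \<one>\<^bsub>M1 M\<^esub>) \<and>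
     (\<forall>x\<in>carrier (M1 M). a20 M (a01 M x) = \<one>\<^bsub>M2 M\<^esub>) \<and>
     (\<forall>x\<in>carrier (M0 M). a21 M (a10 M x) = \<one>\<^bsub>M2 M\<^esub>) \<and>
     (\<forall>x\<in>carrier (M0 M). a01 M (a10 M x) = normop p (M0 M) (one_minus (M0 M) (a02 M \<circ> a20 M)) x) \<and>
     (\<forall>x\<in>carrier (M1 M). a10 M (a01 M x) = normop p (M1 M) (one_minus (M1 M) (a12 M \<circ> a21 M)) x) \<and>
     (\<forall>x\<in>carrier (M2 M).
        normop p (M2 M) (one_minus (M2 M) (a20 M \<circ> a02 M)) x \<otimes>\<^bsub>M2 M\<^esub>
        normop p (M2 M) (one_minus (M2 M) (a21 M \<circ> a12 M)) x = x [^]\<^bsub>M2 M\<^esub> p)"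

definition exact_at :: "('a, 'm) monoid_scheme \<Rightarrow> ('b, 'n) monoid_scheme \<Rightarrow> ('c, 'o) monoid_scheme
    \<Rightarrow> ('a \<Rightarrow> 'b) \<Rightarrow> ('b \<Rightarrow> 'c) \<Rightarrow> bool" where
  "exact_at A B C f g \<longleftrightarrow> {y \<in> carrier B. g y = \<one>\<^bsub>C\<^esub>} = f ` carrier A"

definition exact_kmodule :: "('a, 'b, 'c) kmod \<Rightarrow> bool" where
  "exact_kmodule M \<longleftrightarrow>
     exact_at (M0 M) (M1 M) (M2 M) (a10 M) (a21 M) \<and>
     exact_at (M1 M) (M2 M) (M0 M) (a21 M) (a02 M) \<and>
     exact_at (M2 M) (M0 M) (M1 M) (a02 M) (a10 M) \<and>
     exact_at (M0 M) (M2 M) (M1 M) (a20 M) (a12 M) \<and>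
     exact_at (M2 M) (M1 M) (M0 M) (a12 M) (a01 M) \<and>
     exact_at (M1 M) (M0 M) (M2 M) (a01 M) (a20 M)"

definition kmorph :: "('a, 'b, 'c) kmod \<Rightarrow> ('d, 'e, 'f) kmod
    \<Rightarrow> ('a \<Rightarrow> 'd) \<Rightarrow> ('b \<Rightarrow> 'e) \<Rightarrow> ('c \<Rightarrow> 'f) \<Rightarrow> bool" where
  "kmorph M N f0 f1 f2 \<longleftrightarrow>
     gpres (M0 M) (M0 N) f0 \<and> gpres (M1 M) (M1 N) f1 \<and> gpres (M2 M) (M2 N) f2 \<and>
     (\<forall>x\<in>carrier (M1 M). f0 (a01 M x) = a01 N (f1 x)) \<and>
     (\<forall>x\<in>carrier (M0 M). f1 (a10 M x) = a10 N (f0 x)) \<and>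
     (\<forall>x\<in>carrier (M2 M). f1 (a12 M x) = a12 N (f2 x)) \<and>
     (\<forall>x\<in>carrier (M1 M). f2 (a21 M x) = a21 N (f1 x)) \<and>
     (\<forall>x\<in>carrier (M2 M). f0 (a02 M x) = a02 N (f2 x)) \<and>
     (\<forall>x\<in>carrier (M0 M). f2 (a20 M x) = a20 N (f0 x))"

definition kiso :: "('a, 'b, 'c) kmod \<Rightarrow> ('d, 'e, 'f) kmod \<Rightarrow> bool" where
  "kiso M N \<longleftrightarrow> (\<exists>f0 f1 f2 g0 g1 g2.
     kmorph M N f0 f1 f2 \<and> kmorph N M g0 g1 g2 \<and>
     (\<forall>x\<in>carrier (M0 M). g0 (f0 x) = x) \<and> (\<forall>y\<in>carrier (M0 N). f0 (g0 y) = y) \<and>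
     (\<forall>x\<in>carrier (M1 M). g1 (f1 x) = x) \<and> (\<forall>y\<in>carrier (M1 N). f1 (g1 y) = y) \<and>
     (\<forall>x\<in>carrier (M2 M). g2 (f2 x) = x) \<and> (\<forall>y\<in>carrier (M2 N). f2 (g2 y) = y))"

text \<open>Z/2-graded Z[1/p]-modules and Z[\<vartheta>,1/p]-modules (\<open>\<vartheta>\<close> acts by a degree-preserving
  endomorphism th with N(th) = 0, since Z[\<vartheta>] = Z[x]/(1+x+...+x^(p-1)))\<close>
definition zp_module :: "nat \<Rightarrow> 'a gmonoid \<Rightarrow> bool" where
  "zp_module p X \<longleftrightarrow> graded_group X \<and> upd p X"

definition zth_module :: "nat \<Rightarrow> 'a gmonoid \<Rightarrow> ('a \<Rightarrow> 'a) \<Rightarrow> bool" where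
  "zth_module p Y th \<longleftrightarrow> graded_group Y \<and> upd p Y \<and> gpres Y Y th \<and>
     (\<forall>y\<in>carrier Y. normop p Y th y = \<one>\<^bsub>Y\<^esub>)"

definition gsum :: "'a gmonoid \<Rightarrow> 'b gmonoid \<Rightarrow> ('a \<times> 'b) gmonoid" where
  "gsum G H = \<lparr>carrier = carrier G \<times> carrier H,
     monoid.mult = (\<lambda>u v. (fst u \<otimes>\<^bsub>G\<^esub> fst v, snd u \<otimes>\<^bsub>H\<^esub> snd v)),
     monoid.one = (\<one>\<^bsub>G\<^esub>, \<one>\<^bsub>H\<^esub>),
     ev_part = ev_part G \<times> ev_part H, od_part = od_part G \<times> od_part H\<rparr>"

definition gshift :: "'a gmonoid \<Rightarrow> 'a gmonoid" where
  "gshift G = G\<lparr>ev_part := od_part G, od_part := ev_part G\<rparr>"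

definition Emod :: "nat \<Rightarrow> 'x gmonoid \<Rightarrow> 'y gmonoid \<Rightarrow> ('y \<Rightarrow> 'y) \<Rightarrow> 'z gmonoid \<Rightarrow> ('z \<Rightarrow> 'z)
    \<Rightarrow> ('x \<times> 'y, 'x \<times> 'z, 'y \<times> 'z) kmod" where
  "Emod p X Y thY Z thZ = \<lparr>
     M0 = gsum X Y, M1 = gsum X Z, M2 = gsum Y (gshift Z),
     a01 = (\<lambda>(x, z). (x, \<one>\<^bsub>Y\<^esub>)),
     a10 = (\<lambda>(x, y). (x [^]\<^bsub>X\<^esub> p, \<one>\<^bsub>Z\<^esub>)),
     a12 = (\<lambda>(y, z). (\<one>\<^bsub>X\<^esub>, one_minus Z thZ z)),
     a21 = (\<lambda>(x, z). (\<one>\<^bsub>Y\<^esub>, z)),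
     a02 = (\<lambda>(y, z). (\<one>\<^bsub>X\<^esub>, one_minus Y thY y)),
     a20 = (\<lambda>(x, y). (y, \<one>\<^bsub>Z\<^esub>))\<rparr>"

end

theory Submission
  imports Defs
begin

lemma funpow_hom_closed: "f \<in> hom G G \<Longrightarrow> x \<in> carrier G \<Longrightarrow> (f^^k) x \<in> carrier G"
  by (induction k) (auto intro: hom_in_carrier)

definition Ec :: "('a,'m) monoid_scheme \<Rightarrow> ('a\<Rightarrow>'a) \<Rightarrow> 'a \<Rightarrow> (nat \<Rightarrow> int) \<Rightarrow> nat \<Rightarrow> 'a" where
  "Ec G f x c n = finprod G (\<lambda>k. (f^^k) x [^]\<^bsub>G\<^esub> c k) {..<n}"

definition shiftc :: "(nat \<Rightarrow> int) \<Rightarrow> nat \<Rightarrow> int" where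
  "shiftc c k = (case k of 0 \<Rightarrow> 0 | Suc j \<Rightarrow> c j)"

definition cc :: "nat \<Rightarrow> nat \<Rightarrow> int" where
  "cc i k = (-1)^k * int (i choose k)"

lemma shiftc_0[simp]: "shiftc c 0 = 0" by (simp add: shiftc_def)
lemma shiftc_Suc[simp]: "shiftc c (Suc k) = c k" by (simp add: shiftc_def)

locale endo = comm_group G for G (structure) +
  fixes f assumes f_hom: "f \<in> hom G G"
begin

lemma fp_closed[simp]: "x \<in> carrier G \<Longrightarrow> (f^^k) x \<in> carrier G"
  using funpow_hom_closed[OF f_hom] by blast

lemma f_closed[simp]: "x \<in> carrier G \<Longrightarrow> f x \<in> carrier G"
  using f_hom by (auto intro: hom_in_carrier)

lemma f_mult: "x \<in> carrier G \<Longrightarrow> y \<in> carrier G \<Longrightarrow> f (x \<otimes> y) = f x \<otimes> f y"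
  using f_hom by (simp add: hom_mult)

lemma gh: "group_hom G G f"
  by (simp add: f_hom group_hom.intro group_hom_axioms.intro is_group)

lemma f_one[simp]: "f \<one> = \<one>"
  using group_hom.hom_one[OF gh] .

lemma f_inv: "x \<in> carrier G \<Longrightarrow> f (inv x) = inv (f x)"
  using group_hom.hom_inv[OF gh] by simp

lemma f_ipow: "x \<in> carrier G \<Longrightarrow> f (x [^] (i::int)) = f x [^] i"
  using group_hom.hom_int_pow[OF gh] by simp

lemma Ec_0[simp]: "Ec G f x c 0 = \<one>"
  by (simp add: Ec_def)

lemma Ec_Suc: "x \<in> carrier G \<Longrightarrow> Ec G f x c (Suc n) = (f^^n) x [^] c n \<otimes> Ec G f x c n"
  unfolding Ec_def lessThan_Suc by (subst finprod_insert) auto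

lemma Ec_closed[simp]: "x \<in> carrier G \<Longrightarrow> Ec G f x c n \<in> carrier G"
  by (induction n) (auto simp: Ec_Suc)

lemma Ec_add: "x \<in> carrier G \<Longrightarrow> Ec G f x (\<lambda>k. c k + d k) n = Ec G f x c n \<otimes> Ec G f x d n"
  by (induction n) (auto simp: Ec_Suc int_pow_mult m_ac)

lemma Ec_neg: "x \<in> carrier G \<Longrightarrow> Ec G f x (\<lambda>k. - c k) n = inv (Ec G f x c n)"
  by (induction n) (auto simp: Ec_Suc int_pow_neg inv_mult m_ac)

lemma Ec_shift: "x \<in> carrier G \<Longrightarrow> f (Ec G f x c n) = Ec G f x (shiftc c) (Suc n)"
proof (induction n)
  case 0
  then show ?case by (simp add: Ec_Suc)
next
  case (Suc n)
  have "f (Ec G f x c (Suc n)) = f ((f^^n) x [^] c n) \<otimes> f (Ec G f x c n)"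
    using Suc by (simp add: Ec_Suc f_mult)
  also have "\<dots> = (f^^(Suc n)) x [^] shiftc c (Suc n) \<otimes> Ec G f x (shiftc c) (Suc n)"
    using Suc by (simp add: f_ipow)
  finally show ?case using Suc by (simp add: Ec_Suc)
qed

lemma Ec_trunc: assumes "x \<in> carrier G" "\<And>k. k \<ge> m \<Longrightarrow> c k = 0" "m \<le> n" shows "Ec G f x c n = Ec G f x c m"
  using assms(3) by (induction n rule: dec_induct) (use assms in \<open>auto simp: Ec_Suc\<close>)

lemma Ec_sum: "x \<in> carrier G \<Longrightarrow> Ec G f x (\<lambda>k. \<Sum>i<m. c i k) n = finprod G (\<lambda>i. Ec G f x (c i) n) {..<(m::nat)}"
proof (induction m)
  case 0
  have "Ec G f x (\<lambda>k. 0) n = \<one>" for n using 0 by (induction n) (auto simp: Ec_Suc)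
  then show ?case by simp
next
  case (Suc m)
  have "Ec G f x (\<lambda>k. \<Sum>i<Suc m. c i k) n = Ec G f x (\<lambda>k. c m k + (\<Sum>i<m. c i k)) n"
    by (simp add: add.commute)
  also have "\<dots> = Ec G f x (c m) n \<otimes> Ec G f x (\<lambda>k. \<Sum>i<m. c i k) n"
    using Suc by (simp add: Ec_add)
  finally show ?case using Suc unfolding lessThan_Suc by (subst finprod_insert) auto
qed

lemma cc_Suc: "cc (Suc i) k = cc i k + - shiftc (cc i) k"
proof (cases k)
  case 0 then show ?thesis by (simp add: cc_def shiftc_def)
next
  case (Suc j) then show ?thesis by (simp add: cc_def algebra_simps)
qed

lemma iter_expand: "x \<in> carrier G \<Longrightarrow> (one_minus G f ^^ i) x = Ec G f x (cc i) (Suc i)"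
proof (induction i)
  case 0
  then show ?case by (simp add: Ec_Suc cc_def one_minus_def)
next
  case (Suc i)
  have tr: "Ec G f x (cc i) (Suc i) = Ec G f x (cc i) (Suc (Suc i))"
    using Suc.prems by (intro Ec_trunc[symmetric]) (auto simp: cc_def)
  have "(one_minus G f ^^ Suc i) x = Ec G f x (cc i) (Suc i) \<otimes> inv (f (Ec G f x (cc i) (Suc i)))"
    using Suc by (simp add: one_minus_def)
  also have "\<dots> = Ec G f x (cc i) (Suc (Suc i)) \<otimes> inv (Ec G f x (shiftc (cc i)) (Suc (Suc i)))"
    using Suc.prems tr Ec_shift[of x "cc i" "Suc i"] by simp
  also have "\<dots> = Ec G f x (\<lambda>k. cc i k + - shiftc (cc i) k) (Suc (Suc i))"
    by (simp only: Ec_add[OF Suc.prems] Ec_neg[OF Suc.prems])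
  also have "\<dots> = Ec G f x (cc (Suc i)) (Suc (Suc i))"
    by (rule arg_cong[where f="\<lambda>c. Ec G f x c (Suc (Suc i))"]) (rule ext, rule cc_Suc[symmetric])
  finally show ?case .
qed

lemma sum_cc: assumes "p > 0" shows "(\<Sum>i<p. cc i k) = (-1)^k * int (p choose Suc k)"
proof -
  have "(\<Sum>i<p. cc i k) = (-1)^k * int (\<Sum>i<p. i choose k)"
    by (simp add: cc_def sum_distrib_left)
  also have "(\<Sum>i<p. i choose k) = p choose Suc k"
  proof -
    have "{..<p} = {..p-1}" using assms by auto
    then show ?thesis using sum_choose_upper[of k "p-1"] assms by simp
  qed
  finally show ?thesis .
qed

lemma normop_expand:
  assumes x: "x \<in> carrier G" and p: "p > 0"
  shows "normop p G (one_minus G f) x = Ec G f x (\<lambda>k. (-1)^k * int (p choose Suc k)) p"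
proof -
  have "normop p G (one_minus G f) x = finprod G (\<lambda>i. Ec G f x (cc i) p) {..<p}"
    unfolding normop_def
  proof (rule finprod_cong')
    fix i assume "i \<in> {..<p}"
    then have "Ec G f x (cc i) p = Ec G f x (cc i) (Suc i)"
      using x by (intro Ec_trunc) (auto simp: cc_def)
    then show "(one_minus G f ^^ i) x = Ec G f x (cc i) p"
      using x by (simp add: iter_expand)
  qed (use x in auto)
  also have "\<dots> = Ec G f x (\<lambda>k. \<Sum>i<p. cc i k) p"
    using x by (simp add: Ec_sum)
  also have "\<dots> = Ec G f x (\<lambda>k. (-1)^k * int (p choose Suc k)) p"
    using p by (simp add: sum_cc)
  finally show ?thesis .
qed

lemma poly_mod:
  assumes x: "x \<in> carrier G" and p: "prime p"
  shows "\<exists>d. normop p G (one_minus G f) x =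
     (f^^(p-1)) x [^] ((-1::int)^(p-1)) \<otimes> finprod G (\<lambda>k. ((f^^k) x [^] p) [^] (d k::int)) {..<p-1}"
proof -
  have p0: "p > 0" using p prime_gt_0_nat by blast
  define c where "c = (\<lambda>k. (-1::int)^k * int (p choose Suc k))"
  define d where "d = (\<lambda>k. (-1::int)^k * int ((p choose Suc k) div p))"
  have "normop p G (one_minus G f) x = Ec G f x c (Suc (p-1))"
    using normop_expand[OF x p0] p0 by (simp add: c_def)
  also have "\<dots> = (f^^(p-1)) x [^] c (p-1) \<otimes> Ec G f x c (p-1)"
    using x by (simp add: Ec_Suc)
  also have "c (p-1) = (-1)^(p-1)" using p0 by (simp add: c_def)
  also have "Ec G f x c (p-1) = finprod G (\<lambda>k. ((f^^k) x [^] p) [^] (d k::int)) {..<p-1}"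
    unfolding Ec_def
  proof (rule finprod_cong')
    fix k assume k: "k \<in> {..<p-1}"
    then have "p dvd (p choose Suc k)"
      using p by (intro dvd_choose_prime) auto
    then have "c k = int p * d k"
      by (simp add: c_def d_def algebra_simps flip: of_nat_mult)
    then show "(f ^^ k) x [^] c k = ((f ^^ k) x [^] p) [^] d k"
      using x by (simp add: int_pow_pow flip: int_pow_int)
  qed (use x in auto)
  finally show ?thesis by blast
qed

end

lemma (in comm_monoid) finprod_lessThan_Suc:
  "(\<And>i. g i \<in> carrier G) \<Longrightarrow> finprod G g {..<Suc n} = g n \<otimes> finprod G g {..<n}"
  unfolding lessThan_Suc by (subst finprod_insert) auto

lemma (in comm_group) pow_div:
  "a \<in> carrier G \<Longrightarrow> b \<in> carrier G \<Longrightarrow> (a \<otimes> inv b) [^] (n::nat) = a [^] n \<otimes> inv (b [^] n)"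
  by (simp add: nat_pow_distrib nat_pow_inv)

lemma (in group) div_one_eq: "a \<in> carrier G \<Longrightarrow> b \<in> carrier G \<Longrightarrow> a \<otimes> inv b = \<one> \<Longrightarrow> a = b"
  by (metis inv_solve_right' l_one one_closed)

lemma (in comm_group) finprod_pow_pow:
  assumes "\<And>k. (g::nat\<Rightarrow>'a) k \<in> carrier G"
  shows "finprod G (\<lambda>k. (g k [^] (p::nat)) [^] (d k :: int)) {..<n} = (finprod G (\<lambda>k. g k [^] d k) {..<n}) [^] p"
proof (induction n)
  case 0 then show ?case by simp
next
  case (Suc n)
  have "(g n [^] p) [^] d n = (g n [^] d n) [^] p"
    using assms by (simp add: int_pow_pow mult.commute flip: int_pow_int)
  then show ?case using Suc assms by (simp add: finprod_lessThan_Suc nat_pow_distrib)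
qed

context endo begin

lemma om_closed[simp]: "x \<in> carrier G \<Longrightarrow> one_minus G f x \<in> carrier G"
  by (simp add: one_minus_def)

lemma om_iter_closed[simp]: "x \<in> carrier G \<Longrightarrow> (one_minus G f ^^ i) x \<in> carrier G"
  by (induction i) auto

lemma normop_closed[simp]: "x \<in> carrier G \<Longrightarrow> normop p G (one_minus G f) x \<in> carrier G"
  unfolding normop_def by (rule finprod_closed) auto

lemma fp_mult: "x \<in> carrier G \<Longrightarrow> y \<in> carrier G \<Longrightarrow> (f^^k) (x \<otimes> y) = (f^^k) x \<otimes> (f^^k) y"
  by (induction k) (auto simp: f_mult)

lemma fp_one[simp]: "(f^^k) \<one> = \<one>"
  by (induction k) auto

lemma f_pow: "x \<in> carrier G \<Longrightarrow> f (x [^] (n::nat)) = f x [^] n"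
  by (induction n) (auto simp: f_mult)

lemma fp_pow: "x \<in> carrier G \<Longrightarrow> (f^^k) (x [^] (n::nat)) = ((f^^k) x) [^] n"
  by (induction k) (auto simp: f_pow)

lemma N_fix:
  assumes x: "x \<in> carrier G" and fx: "f x = \<one>"
  shows "normop p G (one_minus G f) x = x [^] p"
proof -
  have "(one_minus G f ^^ i) x = x" for i
    by (induction i) (use x fx in \<open>auto simp: one_minus_def\<close>)
  then show ?thesis using x by (simp add: normop_def finprod_const)
qed

lemma N_form:
  assumes x: "x \<in> carrier G"
  shows "\<exists>z\<in>carrier G. normop p G (one_minus G f) x = x [^] p \<otimes> f z"
proof -
  have it: "\<exists>z\<in>carrier G. (one_minus G f ^^ i) x = x \<otimes> f z" for i
  proof (induction i)
    case 0 then show ?case using x by (intro bexI[of _ \<one>]) auto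
  next
    case (Suc i)
    then obtain z where z: "z \<in> carrier G" "(one_minus G f ^^ i) x = x \<otimes> f z" by blast
    have "(one_minus G f ^^ Suc i) x = x \<otimes> f z \<otimes> inv (f x \<otimes> f (f z))"
      using z x by (simp add: one_minus_def f_mult)
    also have "\<dots> = x \<otimes> f (z \<otimes> inv x \<otimes> inv (f z))"
      using z x by (simp add: f_mult f_inv inv_mult m_ac)
    finally show ?case using z x by (intro bexI[of _ "z \<otimes> inv x \<otimes> inv (f z)"]) auto
  qed
  have "\<exists>z\<in>carrier G. finprod G (\<lambda>i. (one_minus G f ^^ i) x) {..<n} = x [^] n \<otimes> f z" for n
  proof (induction n)
    case 0 then show ?case by (intro bexI[of _ \<one>]) auto
  next
    case (Suc n)
    then obtain z where z: "z \<in> carrier G" "finprod G (\<lambda>i. (one_minus G f ^^ i) x) {..<n} = x [^] n \<otimes> f z" by blast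
    obtain z' where z': "z' \<in> carrier G" "(one_minus G f ^^ n) x = x \<otimes> f z'" using it by blast
    have "finprod G (\<lambda>i. (one_minus G f ^^ i) x) {..<Suc n} = x \<otimes> f z' \<otimes> (x [^] n \<otimes> f z)"
      using z z' x by (simp add: finprod_lessThan_Suc)
    also have "\<dots> = x [^] Suc n \<otimes> f (z' \<otimes> z)"
      using z z' x by (simp add: f_mult m_ac nat_pow_Suc2)
    finally show ?case using z z' by blast
  qed
  then show ?thesis unfolding normop_def by blast
qed

lemma cor_tors:
  assumes x: "x \<in> carrier G" and p: "prime p" and xp: "x [^] p = \<one>"
    and N: "normop p G (one_minus G f) x = \<one>"
  shows "(f^^(p-1)) x = \<one>"
proof -
  obtain d where d: "normop p G (one_minus G f) x =
     (f^^(p-1)) x [^] ((-1::int)^(p-1)) \<otimes> finprod G (\<lambda>k. ((f^^k) x [^] p) [^] (d k::int)) {..<p-1}"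
    using poly_mod[OF x p] by blast
  have "((f^^k) x [^] p) = \<one>" for k using xp x by (simp flip: fp_pow)
  then have "finprod G (\<lambda>k. ((f^^k) x [^] p) [^] (d k::int)) {..<p-1} = \<one>"
    by simp
  then have "(f^^(p-1)) x [^] ((-1::int)^(p-1)) = \<one>" using d N x by simp
  then show ?thesis using x
    by (cases "even (p-1)") (auto simp: int_pow_neg)
qed

lemma cor_cotors:
  assumes x: "x \<in> carrier G" and p: "prime p" and z: "z \<in> carrier G"
    and N: "normop p G (one_minus G f) x = z [^] p"
  shows "\<exists>w\<in>carrier G. (f^^(p-1)) x = w [^] p"
proof -
  obtain d where d: "normop p G (one_minus G f) x =
     (f^^(p-1)) x [^] ((-1::int)^(p-1)) \<otimes> finprod G (\<lambda>k. ((f^^k) x [^] p) [^] (d k::int)) {..<p-1}"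
    using poly_mod[OF x p] by blast
  define q where "q = finprod G (\<lambda>k. (f^^k) x [^] d k) {..<p-1}"
  have q: "q \<in> carrier G" unfolding q_def using x by (intro finprod_closed) auto
  have "finprod G (\<lambda>k. ((f^^k) x [^] p) [^] (d k::int)) {..<p-1} = q [^] p"
    unfolding q_def using x by (intro finprod_pow_pow) auto
  then have "z [^] p = (f^^(p-1)) x [^] ((-1::int)^(p-1)) \<otimes> q [^] p"
    using d N by simp
  then have "(f^^(p-1)) x [^] ((-1::int)^(p-1)) = z [^] p \<otimes> inv (q [^] p)"
    using x q z by (subst inv_solve_right) auto
  then have e: "(f^^(p-1)) x [^] ((-1::int)^(p-1)) = (z \<otimes> inv q) [^] p"
    using x q z by (simp add: pow_div)
  show ?thesis
  proof (cases "even (p-1)")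
    case True then show ?thesis using e x z q by auto
  next
    case False
    then have "inv ((f^^(p-1)) x) = (z \<otimes> inv q) [^] p" using e x by (simp add: int_pow_neg)
    then have "(f^^(p-1)) x = inv ((z \<otimes> inv q) [^] p)" using x z q by (metis fp_closed inv_inv)
    then show ?thesis using x z q by (intro bexI[of _ "inv (z \<otimes> inv q)"]) (auto simp: nat_pow_inv)
  qed
qed

end

lemma hom_facts:
  assumes "group G" "group H" "h \<in> hom G H"
  shows hf_closed: "x \<in> carrier G \<Longrightarrow> h x \<in> carrier H"
    and hf_mult: "x \<in> carrier G \<Longrightarrow> y \<in> carrier G \<Longrightarrow> h (x \<otimes>\<^bsub>G\<^esub> y) = h x \<otimes>\<^bsub>H\<^esub> h y"
    and hf_one: "h \<one>\<^bsub>G\<^esub> = \<one>\<^bsub>H\<^esub>"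
    and hf_inv: "x \<in> carrier G \<Longrightarrow> h (inv\<^bsub>G\<^esub> x) = inv\<^bsub>H\<^esub> (h x)"
    and hf_pow: "x \<in> carrier G \<Longrightarrow> h (x [^]\<^bsub>G\<^esub> (n::nat)) = h x [^]\<^bsub>H\<^esub> n"
proof -
  have gh: "group_hom G H h" using assms by (simp add: group_hom.intro group_hom_axioms.intro)
  show "x \<in> carrier G \<Longrightarrow> h x \<in> carrier H" using assms(3) by (rule hom_in_carrier)
  show "x \<in> carrier G \<Longrightarrow> y \<in> carrier G \<Longrightarrow> h (x \<otimes>\<^bsub>G\<^esub> y) = h x \<otimes>\<^bsub>H\<^esub> h y"
    using assms(3) by (rule hom_mult)
  show "h \<one>\<^bsub>G\<^esub> = \<one>\<^bsub>H\<^esub>" using group_hom.hom_one[OF gh] .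
  show "x \<in> carrier G \<Longrightarrow> h (inv\<^bsub>G\<^esub> x) = inv\<^bsub>H\<^esub> (h x)" using group_hom.hom_inv[OF gh] by simp
  show "x \<in> carrier G \<Longrightarrow> h (x [^]\<^bsub>G\<^esub> (n::nat)) = h x [^]\<^bsub>H\<^esub> n" using group_hom.hom_nat_pow[OF gh] by simp
qed

lemma exactD: "exact_at A B C f g \<Longrightarrow> y \<in> carrier B \<Longrightarrow> g y = \<one>\<^bsub>C\<^esub> \<Longrightarrow> \<exists>x\<in>carrier A. y = f x"
  unfolding exact_at_def by blast

lemma exactI2: "exact_at A B C f g \<Longrightarrow> x \<in> carrier A \<Longrightarrow> g (f x) = \<one>\<^bsub>C\<^esub>"
  unfolding exact_at_def by blast

lemma upd_iff:
  fixes G (structure)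
  assumes "comm_group G"
  shows "upd p G \<longleftrightarrow> (\<forall>x\<in>carrier G. x [^]\<^bsub>G\<^esub> p = \<one>\<^bsub>G\<^esub> \<longrightarrow> x = \<one>\<^bsub>G\<^esub>) \<and> (\<forall>y\<in>carrier G. \<exists>x\<in>carrier G. x [^]\<^bsub>G\<^esub> p = y)"
proof -
  interpret comm_group G by fact
  have "inj_on (\<lambda>x. x [^] p) (carrier G) \<longleftrightarrow> (\<forall>x\<in>carrier G. x [^] p = \<one> \<longrightarrow> x = \<one>)"
  proof
    assume i: "inj_on (\<lambda>x. x [^] p) (carrier G)"
    show "\<forall>x\<in>carrier G. x [^] p = \<one> \<longrightarrow> x = \<one>"
      using inj_onD[OF i, of _ \<one>] by auto
  next
    assume k: "\<forall>x\<in>carrier G. x [^] p = \<one> \<longrightarrow> x = \<one>"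
    show "inj_on (\<lambda>x. x [^] p) (carrier G)"
    proof (rule inj_onI)
      fix x y assume xy: "x \<in> carrier G" "y \<in> carrier G" "x [^] p = y [^] p"
      have "(x \<otimes> inv y) [^] p = \<one>"
        using xy by (simp add: pow_div)
      then have "x \<otimes> inv y = \<one>" using k xy by auto
      then show "x = y" using xy div_one_eq by blast
    qed
  qed
  moreover have "(\<lambda>x. x [^] p) ` carrier G = carrier G \<longleftrightarrow> (\<forall>y\<in>carrier G. \<exists>x\<in>carrier G. x [^] p = y)"
    by (auto simp: image_iff) (metis image_iff)
  ultimately show ?thesis unfolding upd_def bij_betw_def by blast
qed

locale hexa =
  fixes p :: nat and G0 G1 G2 and f01 f10 f12 f21 f02 f20
  assumes prime: "prime p"
    and cg0: "comm_group G0" and cg1: "comm_group G1" and cg2: "comm_group G2"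
    and h01: "f01 \<in> hom G1 G0" and h10: "f10 \<in> hom G0 G1"
    and h12: "f12 \<in> hom G2 G1" and h21: "f21 \<in> hom G1 G2"
    and h02: "f02 \<in> hom G2 G0" and h20: "f20 \<in> hom G0 G2"
    and n0: "\<forall>x\<in>carrier G0. f01 (f10 x) = normop p G0 (one_minus G0 (f02 \<circ> f20)) x"
    and n1: "\<forall>x\<in>carrier G1. f10 (f01 x) = normop p G1 (one_minus G1 (f12 \<circ> f21)) x"
    and n2: "\<forall>x\<in>carrier G2. normop p G2 (one_minus G2 (f20 \<circ> f02)) x \<otimes>\<^bsub>G2\<^esub>
        normop p G2 (one_minus G2 (f21 \<circ> f12)) x = x [^]\<^bsub>G2\<^esub> p"
    and e1: "exact_at G0 G1 G2 f10 f21" and e2: "exact_at G1 G2 G0 f21 f02"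
    and e3: "exact_at G2 G0 G1 f02 f10" and e4: "exact_at G0 G2 G1 f20 f12"
    and e5: "exact_at G2 G1 G0 f12 f01" and e6: "exact_at G1 G0 G2 f01 f20"
begin

sublocale g0: comm_group G0 by (rule cg0)
sublocale g1: comm_group G1 by (rule cg1)
sublocale g2: comm_group G2 by (rule cg2)

lemmas f01s[simp] = hom_facts[OF g1.is_group g0.is_group h01]
lemmas f10s[simp] = hom_facts[OF g0.is_group g1.is_group h10]
lemmas f12s[simp] = hom_facts[OF g2.is_group g1.is_group h12]
lemmas f21s[simp] = hom_facts[OF g1.is_group g2.is_group h21]
lemmas f02s[simp] = hom_facts[OF g2.is_group g0.is_group h02]
lemmas f20s[simp] = hom_facts[OF g0.is_group g2.is_group h20]

lemma o1[simp]: "x \<in> carrier G0 \<Longrightarrow> f21 (f10 x) = \<one>\<^bsub>G2\<^esub>" using exactI2[OF e1] .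
lemma o2[simp]: "x \<in> carrier G1 \<Longrightarrow> f02 (f21 x) = \<one>\<^bsub>G0\<^esub>" using exactI2[OF e2] .
lemma o3[simp]: "x \<in> carrier G2 \<Longrightarrow> f10 (f02 x) = \<one>\<^bsub>G1\<^esub>" using exactI2[OF e3] .
lemma o4[simp]: "x \<in> carrier G0 \<Longrightarrow> f12 (f20 x) = \<one>\<^bsub>G1\<^esub>" using exactI2[OF e4] .
lemma o5[simp]: "x \<in> carrier G2 \<Longrightarrow> f01 (f12 x) = \<one>\<^bsub>G0\<^esub>" using exactI2[OF e5] .
lemma o6[simp]: "x \<in> carrier G1 \<Longrightarrow> f20 (f01 x) = \<one>\<^bsub>G2\<^esub>" using exactI2[OF e6] .

lemma x1: "y \<in> carrier G1 \<Longrightarrow> f21 y = \<one>\<^bsub>G2\<^esub> \<Longrightarrow> \<exists>x\<in>carrier G0. y = f10 x" using exactD[OF e1] .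
lemma x2: "y \<in> carrier G2 \<Longrightarrow> f02 y = \<one>\<^bsub>G0\<^esub> \<Longrightarrow> \<exists>x\<in>carrier G1. y = f21 x" using exactD[OF e2] .
lemma x3: "y \<in> carrier G0 \<Longrightarrow> f10 y = \<one>\<^bsub>G1\<^esub> \<Longrightarrow> \<exists>x\<in>carrier G2. y = f02 x" using exactD[OF e3] .
lemma x4: "y \<in> carrier G2 \<Longrightarrow> f12 y = \<one>\<^bsub>G1\<^esub> \<Longrightarrow> \<exists>x\<in>carrier G0. y = f20 x" using exactD[OF e4] .
lemma x5: "y \<in> carrier G1 \<Longrightarrow> f01 y = \<one>\<^bsub>G0\<^esub> \<Longrightarrow> \<exists>x\<in>carrier G2. y = f12 x" using exactD[OF e5] .
lemma x6: "y \<in> carrier G0 \<Longrightarrow> f20 y = \<one>\<^bsub>G2\<^esub> \<Longrightarrow> \<exists>x\<in>carrier G1. y = f01 x" using exactD[OF e6] .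

lemma hom_comp: "f \<in> hom G H \<Longrightarrow> g \<in> hom H G \<Longrightarrow> g \<circ> f \<in> hom G G"
  unfolding hom_def by (auto simp: Pi_def)

lemma homA: "f20 \<circ> f02 \<in> hom G2 G2" by (rule hom_comp[OF h02 h20])
lemma homB: "f21 \<circ> f12 \<in> hom G2 G2" by (rule hom_comp[OF h12 h21])
lemma homU: "f02 \<circ> f20 \<in> hom G0 G0" by (rule hom_comp[OF h20 h02])
lemma homV: "f12 \<circ> f21 \<in> hom G1 G1" by (rule hom_comp[OF h21 h12])

sublocale eA: endo G2 "f20 \<circ> f02" by (unfold_locales) (rule homA)
sublocale eB: endo G2 "f21 \<circ> f12" by (unfold_locales) (rule homB)
sublocale eU: endo G0 "f02 \<circ> f20" by (unfold_locales) (rule homU)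
sublocale eV: endo G1 "f12 \<circ> f21" by (unfold_locales) (rule homV)


end

context hexa begin
lemma bex2I: "a \<in> A \<Longrightarrow> b \<in> B \<Longrightarrow> P a b \<Longrightarrow> \<exists>x\<in>A. \<exists>y\<in>B. P x y" by blast

lemma A02:
  assumes u0: "upd p G0"
  shows "upd p G2"
proof -
  have inj0: "\<And>x. x \<in> carrier G0 \<Longrightarrow> x [^]\<^bsub>G0\<^esub> p = \<one>\<^bsub>G0\<^esub> \<Longrightarrow> x = \<one>\<^bsub>G0\<^esub>"
    and surj0: "\<And>y. y \<in> carrier G0 \<Longrightarrow> \<exists>x\<in>carrier G0. x [^]\<^bsub>G0\<^esub> p = y"
    using u0 upd_iff[OF cg0] by auto
  have L21: "\<exists>m\<in>carrier G1. m [^]\<^bsub>G1\<^esub> p = \<one>\<^bsub>G1\<^esub> \<and> f21 m = y"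
    if y: "y \<in> carrier G2" "y [^]\<^bsub>G2\<^esub> p = \<one>\<^bsub>G2\<^esub>" for y
  proof -
    have "f02 y [^]\<^bsub>G0\<^esub> p = \<one>\<^bsub>G0\<^esub>" using y by (simp flip: f02s(5))
    then have "f02 y = \<one>\<^bsub>G0\<^esub>" by (rule inj0[rotated]) (use y in simp)
    then obtain m0 where m0: "m0 \<in> carrier G1" "y = f21 m0" using x2 y by blast
    have "f21 (m0 [^]\<^bsub>G1\<^esub> p) = \<one>\<^bsub>G2\<^esub>" using m0 y by simp
    then obtain x where x: "x \<in> carrier G0" "m0 [^]\<^bsub>G1\<^esub> p = f10 x" using x1 m0 by blast
    obtain x' where x': "x' \<in> carrier G0" "x' [^]\<^bsub>G0\<^esub> p = x" using surj0 x by blast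
    define m where "m = m0 \<otimes>\<^bsub>G1\<^esub> inv\<^bsub>G1\<^esub> (f10 x')"
    have "m [^]\<^bsub>G1\<^esub> p = \<one>\<^bsub>G1\<^esub>"
      unfolding m_def using m0 x x' by (simp add: g1.pow_div flip: f10s(5))
    moreover have "f21 m = y" unfolding m_def using m0 x' by simp
    moreover have "m \<in> carrier G1" unfolding m_def using m0 x' by simp
    ultimately show ?thesis by blast
  qed
  have L12: "\<exists>w\<in>carrier G2. w [^]\<^bsub>G2\<^esub> p = \<one>\<^bsub>G2\<^esub> \<and> f12 w = m"
    if m: "m \<in> carrier G1" "m [^]\<^bsub>G1\<^esub> p = \<one>\<^bsub>G1\<^esub>" for m
  proof -
    have "f01 m [^]\<^bsub>G0\<^esub> p = \<one>\<^bsub>G0\<^esub>" using m by (simp flip: f01s(5))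
    then have "f01 m = \<one>\<^bsub>G0\<^esub>" by (rule inj0[rotated]) (use m in simp)
    then obtain w0 where w0: "w0 \<in> carrier G2" "m = f12 w0" using x5 m by blast
    have "f12 (w0 [^]\<^bsub>G2\<^esub> p) = \<one>\<^bsub>G1\<^esub>" using w0 m by simp
    then obtain x where x: "x \<in> carrier G0" "w0 [^]\<^bsub>G2\<^esub> p = f20 x" using x4 w0 by blast
    obtain x' where x': "x' \<in> carrier G0" "x' [^]\<^bsub>G0\<^esub> p = x" using surj0 x by blast
    define w where "w = w0 \<otimes>\<^bsub>G2\<^esub> inv\<^bsub>G2\<^esub> (f20 x')"
    have "w [^]\<^bsub>G2\<^esub> p = \<one>\<^bsub>G2\<^esub>"
      unfolding w_def using w0 x x' by (simp add: g2.pow_div flip: f20s(5))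
    moreover have "f12 w = m" unfolding w_def using w0 x' by simp
    moreover have "w \<in> carrier G2" unfolding w_def using w0 x' by simp
    ultimately show ?thesis by blast
  qed
  have T2B: "\<exists>w\<in>carrier G2. w [^]\<^bsub>G2\<^esub> p = \<one>\<^bsub>G2\<^esub> \<and> (f21 \<circ> f12) w = y"
    if y: "y \<in> carrier G2" "y [^]\<^bsub>G2\<^esub> p = \<one>\<^bsub>G2\<^esub>" for y
  proof -
    obtain m where m: "m \<in> carrier G1" "m [^]\<^bsub>G1\<^esub> p = \<one>\<^bsub>G1\<^esub>" "f21 m = y"
      using L21[OF y] by blast
    obtain w where w: "w \<in> carrier G2" "w [^]\<^bsub>G2\<^esub> p = \<one>\<^bsub>G2\<^esub>" "f12 w = m"
      using L12[OF m(1,2)] by blast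
    show ?thesis using m w by auto
  qed
  have T2N: "((f21 \<circ> f12)^^(p-1)) y = \<one>\<^bsub>G2\<^esub>"
    if y: "y \<in> carrier G2" "y [^]\<^bsub>G2\<^esub> p = \<one>\<^bsub>G2\<^esub>" for y
  proof -
    have "f02 y [^]\<^bsub>G0\<^esub> p = \<one>\<^bsub>G0\<^esub>" using y by (simp flip: f02s(5))
    then have "f02 y = \<one>\<^bsub>G0\<^esub>" by (rule inj0[rotated]) (use y in simp)
    then have "normop p G2 (one_minus G2 (f20 \<circ> f02)) y = y [^]\<^bsub>G2\<^esub> p"
      using y by (intro eA.N_fix) auto
    moreover have "normop p G2 (one_minus G2 (f20 \<circ> f02)) y \<otimes>\<^bsub>G2\<^esub>
        normop p G2 (one_minus G2 (f21 \<circ> f12)) y = y [^]\<^bsub>G2\<^esub> p" using n2 y by blast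
    ultimately have "normop p G2 (one_minus G2 (f21 \<circ> f12)) y = \<one>\<^bsub>G2\<^esub>"
      using y eB.normop_closed[OF y(1)] by simp
    then show ?thesis using eB.cor_tors[OF y(1) prime y(2)] by blast
  qed
  have iter: "\<exists>w\<in>carrier G2. w [^]\<^bsub>G2\<^esub> p = \<one>\<^bsub>G2\<^esub> \<and> ((f21 \<circ> f12)^^k) w = y"
    if y: "y \<in> carrier G2" "y [^]\<^bsub>G2\<^esub> p = \<one>\<^bsub>G2\<^esub>" for y k
    using y
  proof (induction k arbitrary: y)
    case 0 then show ?case by auto
  next
    case (Suc k)
    obtain w where w: "w \<in> carrier G2" "w [^]\<^bsub>G2\<^esub> p = \<one>\<^bsub>G2\<^esub>" "((f21 \<circ> f12)^^k) w = y"
      using Suc by blast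
    obtain w' where w': "w' \<in> carrier G2" "w' [^]\<^bsub>G2\<^esub> p = \<one>\<^bsub>G2\<^esub>" "(f21 \<circ> f12) w' = w"
      using T2B[OF w(1,2)] by blast
    have "((f21 \<circ> f12)^^Suc k) w' = y" using w w' by (simp add: funpow_Suc_right del: funpow.simps)
    then show ?case using w' by blast
  qed
  have inj2: "y = \<one>\<^bsub>G2\<^esub>" if y: "y \<in> carrier G2" "y [^]\<^bsub>G2\<^esub> p = \<one>\<^bsub>G2\<^esub>" for y
  proof -
    obtain w where w: "w \<in> carrier G2" "w [^]\<^bsub>G2\<^esub> p = \<one>\<^bsub>G2\<^esub>" "((f21 \<circ> f12)^^(p-1)) w = y"
      using iter[OF y, of "p-1"] by blast
    show ?thesis using T2N[OF w(1,2)] w(3) by simp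
  qed
  have inj1: "m = \<one>\<^bsub>G1\<^esub>" if m: "m \<in> carrier G1" "m [^]\<^bsub>G1\<^esub> p = \<one>\<^bsub>G1\<^esub>" for m
  proof -
    obtain w where w: "w \<in> carrier G2" "w [^]\<^bsub>G2\<^esub> p = \<one>\<^bsub>G2\<^esub>" "f12 w = m"
      using L12[OF m] by blast
    show ?thesis using inj2[OF w(1,2)] w(3) by simp
  qed
  let ?P = "\<lambda>y. \<exists>z\<in>carrier G2. y = z [^]\<^bsub>G2\<^esub> p"
  have S1: "\<exists>w\<in>carrier G2. \<exists>z\<in>carrier G2. y = (f21 \<circ> f12) w \<otimes>\<^bsub>G2\<^esub> z [^]\<^bsub>G2\<^esub> p"
    if y: "y \<in> carrier G2" for y
  proof -
    obtain x where x: "x \<in> carrier G0" "x [^]\<^bsub>G0\<^esub> p = f02 y" using surj0[OF f02s(1)[OF y]] by blast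
    have "f10 x [^]\<^bsub>G1\<^esub> p = \<one>\<^bsub>G1\<^esub>" using x y by (simp flip: f10s(5))
    then have "f10 x = \<one>\<^bsub>G1\<^esub>" by (rule inj1[rotated]) (use x in simp)
    then obtain w1 where w1: "w1 \<in> carrier G2" "x = f02 w1" using x3 x by blast
    have c1: "y \<otimes>\<^bsub>G2\<^esub> inv\<^bsub>G2\<^esub> (w1 [^]\<^bsub>G2\<^esub> p) \<in> carrier G2" using w1 y by simp
    have "f02 (y \<otimes>\<^bsub>G2\<^esub> inv\<^bsub>G2\<^esub> (w1 [^]\<^bsub>G2\<^esub> p)) = \<one>\<^bsub>G0\<^esub>"
      using x w1 y by simp
    then obtain m where m: "m \<in> carrier G1" "y \<otimes>\<^bsub>G2\<^esub> inv\<^bsub>G2\<^esub> (w1 [^]\<^bsub>G2\<^esub> p) = f21 m"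
      using x2[OF c1] by blast
    obtain x2 where x2: "x2 \<in> carrier G0" "x2 [^]\<^bsub>G0\<^esub> p = f01 m" using surj0[OF f01s(1)[OF m(1)]] by blast
    have "f20 x2 [^]\<^bsub>G2\<^esub> p = \<one>\<^bsub>G2\<^esub>" using x2 m by (simp flip: f20s(5))
    then have "f20 x2 = \<one>\<^bsub>G2\<^esub>" by (rule inj2[rotated]) (use x2 in simp)
    then obtain m2 where m2: "m2 \<in> carrier G1" "x2 = f01 m2" using x6 x2 by blast
    have c2: "m \<otimes>\<^bsub>G1\<^esub> inv\<^bsub>G1\<^esub> (m2 [^]\<^bsub>G1\<^esub> p) \<in> carrier G1" using m m2 by simp
    have "f01 (m \<otimes>\<^bsub>G1\<^esub> inv\<^bsub>G1\<^esub> (m2 [^]\<^bsub>G1\<^esub> p)) = \<one>\<^bsub>G0\<^esub>"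
      using x2 m2 m by simp
    then obtain w where w: "w \<in> carrier G2" "m \<otimes>\<^bsub>G1\<^esub> inv\<^bsub>G1\<^esub> (m2 [^]\<^bsub>G1\<^esub> p) = f12 w"
      using x5[OF c2] by blast
    have mm: "m = f12 w \<otimes>\<^bsub>G1\<^esub> m2 [^]\<^bsub>G1\<^esub> p"
      using w(2) g1.inv_solve_right'[of "f12 w" m "m2 [^]\<^bsub>G1\<^esub> p"] w(1) m(1) m2(1) by simp
    have yy: "y = f21 m \<otimes>\<^bsub>G2\<^esub> w1 [^]\<^bsub>G2\<^esub> p"
      using m(2) g2.inv_solve_right'[of "f21 m" y "w1 [^]\<^bsub>G2\<^esub> p"] w1(1) m(1) y by simp
    have eq: "y = (f21 \<circ> f12) w \<otimes>\<^bsub>G2\<^esub> (f21 m2 \<otimes>\<^bsub>G2\<^esub> w1) [^]\<^bsub>G2\<^esub> p"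
      using yy mm w m2 w1 by (simp add: g2.nat_pow_distrib g2.m_assoc)
    have c3: "f21 m2 \<otimes>\<^bsub>G2\<^esub> w1 \<in> carrier G2" using m2(1) w1(1) by simp
    show ?thesis by (rule bex2I[where P="\<lambda>a b. y = (f21 \<circ> f12) a \<otimes>\<^bsub>G2\<^esub> b [^]\<^bsub>G2\<^esub> p", OF w(1) c3 eq])
  qed
  have S2: "?P (normop p G2 (one_minus G2 (f21 \<circ> f12)) y)" if y: "y \<in> carrier G2" for y
  proof -
    obtain z where z: "z \<in> carrier G2" "normop p G2 (one_minus G2 (f20 \<circ> f02)) y = y [^]\<^bsub>G2\<^esub> p \<otimes>\<^bsub>G2\<^esub> (f20 \<circ> f02) z"
      using eA.N_form[OF y] by blast
    obtain x where x: "x \<in> carrier G0" "x [^]\<^bsub>G0\<^esub> p = f02 z" using surj0[OF f02s(1)[OF z(1)]] by blast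
    have NA: "normop p G2 (one_minus G2 (f20 \<circ> f02)) y = (y \<otimes>\<^bsub>G2\<^esub> f20 x) [^]\<^bsub>G2\<^esub> p"
      using z x y by (simp add: g2.nat_pow_distrib flip: f20s(5))
    have qc: "(y \<otimes>\<^bsub>G2\<^esub> f20 x) [^]\<^bsub>G2\<^esub> p \<in> carrier G2" using y x by simp
    have nn: "(y \<otimes>\<^bsub>G2\<^esub> f20 x) [^]\<^bsub>G2\<^esub> p \<otimes>\<^bsub>G2\<^esub> normop p G2 (one_minus G2 (f21 \<circ> f12)) y = y [^]\<^bsub>G2\<^esub> p"
    proof -
      have "normop p G2 (one_minus G2 (f20 \<circ> f02)) y \<otimes>\<^bsub>G2\<^esub>
        normop p G2 (one_minus G2 (f21 \<circ> f12)) y = y [^]\<^bsub>G2\<^esub> p" using n2 y by blast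
      then show ?thesis by (simp only: NA)
    qed
    have "normop p G2 (one_minus G2 (f21 \<circ> f12)) y = inv\<^bsub>G2\<^esub> ((y \<otimes>\<^bsub>G2\<^esub> f20 x) [^]\<^bsub>G2\<^esub> p) \<otimes>\<^bsub>G2\<^esub> y [^]\<^bsub>G2\<^esub> p"
      using g2.inv_solve_left[OF eB.normop_closed[OF y] qc g2.nat_pow_closed[OF y]] nn by simp
    also have "\<dots> = y [^]\<^bsub>G2\<^esub> p \<otimes>\<^bsub>G2\<^esub> inv\<^bsub>G2\<^esub> ((y \<otimes>\<^bsub>G2\<^esub> f20 x) [^]\<^bsub>G2\<^esub> p)"
      using qc y by (simp add: g2.m_comm)
    also have "\<dots> = (y \<otimes>\<^bsub>G2\<^esub> inv\<^bsub>G2\<^esub> (y \<otimes>\<^bsub>G2\<^esub> f20 x)) [^]\<^bsub>G2\<^esub> p"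
      using y x by (simp add: g2.pow_div)
    finally have e: "normop p G2 (one_minus G2 (f21 \<circ> f12)) y = (y \<otimes>\<^bsub>G2\<^esub> inv\<^bsub>G2\<^esub> (y \<otimes>\<^bsub>G2\<^esub> f20 x)) [^]\<^bsub>G2\<^esub> p" .
    have "y \<otimes>\<^bsub>G2\<^esub> inv\<^bsub>G2\<^esub> (y \<otimes>\<^bsub>G2\<^esub> f20 x) \<in> carrier G2" using y x by simp
    then show ?thesis using e by (rule bexI[rotated])
  qed
  have S3: "?P (((f21 \<circ> f12)^^(p-1)) y)" if y: "y \<in> carrier G2" for y
  proof -
    obtain z where z: "z \<in> carrier G2" "normop p G2 (one_minus G2 (f21 \<circ> f12)) y = z [^]\<^bsub>G2\<^esub> p"
      using S2[OF y] by blast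
    show ?thesis using eB.cor_cotors[OF y prime z] .
  qed
  have S4: "\<exists>w\<in>carrier G2. \<exists>z\<in>carrier G2. y = ((f21 \<circ> f12)^^k) w \<otimes>\<^bsub>G2\<^esub> z [^]\<^bsub>G2\<^esub> p"
    if y: "y \<in> carrier G2" for y k
    using y
  proof (induction k arbitrary: y)
    case 0 then show ?case by (intro bexI[of _ y] bexI[of _ "\<one>\<^bsub>G2\<^esub>"]) auto
  next
    case (Suc k)
    obtain w z where wz: "w \<in> carrier G2" "z \<in> carrier G2" "y = ((f21 \<circ> f12)^^k) w \<otimes>\<^bsub>G2\<^esub> z [^]\<^bsub>G2\<^esub> p"
      using Suc by blast
    obtain w' z' where wz': "w' \<in> carrier G2" "z' \<in> carrier G2" "w = (f21 \<circ> f12) w' \<otimes>\<^bsub>G2\<^esub> z' [^]\<^bsub>G2\<^esub> p"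
      using S1[OF wz(1)] by blast
    have "y = ((f21 \<circ> f12)^^Suc k) w' \<otimes>\<^bsub>G2\<^esub> (((f21 \<circ> f12)^^k) z' \<otimes>\<^bsub>G2\<^esub> z) [^]\<^bsub>G2\<^esub> p"
      using wz wz' by (simp add: eB.fp_mult eB.fp_pow g2.nat_pow_distrib g2.m_assoc funpow_Suc_right del: funpow.simps)
    moreover have "((f21 \<circ> f12)^^k) z' \<otimes>\<^bsub>G2\<^esub> z \<in> carrier G2" using wz wz' by simp
    ultimately show ?case using wz'(1) by blast
  qed
  have surj2: "\<exists>x\<in>carrier G2. x [^]\<^bsub>G2\<^esub> p = y" if y: "y \<in> carrier G2" for y
  proof -
    obtain w z where wz: "w \<in> carrier G2" "z \<in> carrier G2" "y = ((f21 \<circ> f12)^^(p-1)) w \<otimes>\<^bsub>G2\<^esub> z [^]\<^bsub>G2\<^esub> p"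
      using S4[OF y] by blast
    obtain q where q: "q \<in> carrier G2" "((f21 \<circ> f12)^^(p-1)) w = q [^]\<^bsub>G2\<^esub> p" using S3[OF wz(1)] by blast
    have "y = (q \<otimes>\<^bsub>G2\<^esub> z) [^]\<^bsub>G2\<^esub> p" using wz q by (simp add: g2.nat_pow_distrib)
    moreover have "q \<otimes>\<^bsub>G2\<^esub> z \<in> carrier G2" using q wz by simp
    ultimately show ?thesis by (intro bexI[of _ "q \<otimes>\<^bsub>G2\<^esub> z"]) simp_all
  qed
  show ?thesis using upd_iff[OF cg2] inj2 surj2 by blast
qed

end

context hexa begin

lemma A20:
  assumes u2: "upd p G2"
  shows "upd p G0"
proof -
  have inj2: "\<And>x. x \<in> carrier G2 \<Longrightarrow> x [^]\<^bsub>G2\<^esub> p = \<one>\<^bsub>G2\<^esub> \<Longrightarrow> x = \<one>\<^bsub>G2\<^esub>"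
    and surj2: "\<And>y. y \<in> carrier G2 \<Longrightarrow> \<exists>x\<in>carrier G2. x [^]\<^bsub>G2\<^esub> p = y"
    using u2 upd_iff[OF cg2] by auto
  have L01: "\<exists>m\<in>carrier G1. m [^]\<^bsub>G1\<^esub> p = \<one>\<^bsub>G1\<^esub> \<and> f01 m = x"
    if x: "x \<in> carrier G0" "x [^]\<^bsub>G0\<^esub> p = \<one>\<^bsub>G0\<^esub>" for x
  proof -
    have "f20 x [^]\<^bsub>G2\<^esub> p = \<one>\<^bsub>G2\<^esub>" using x by (simp flip: f20s(5))
    then have "f20 x = \<one>\<^bsub>G2\<^esub>" by (rule inj2[rotated]) (use x in simp)
    then obtain m0 where m0: "m0 \<in> carrier G1" "x = f01 m0" using x6 x by blast
    have "f01 (m0 [^]\<^bsub>G1\<^esub> p) = \<one>\<^bsub>G0\<^esub>" using m0 x by simp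
    then obtain w where w: "w \<in> carrier G2" "m0 [^]\<^bsub>G1\<^esub> p = f12 w"
      using x5[OF g1.nat_pow_closed[OF m0(1)]] by blast
    obtain w' where w': "w' \<in> carrier G2" "w' [^]\<^bsub>G2\<^esub> p = w" using surj2[OF w(1)] by blast
    define m where "m = m0 \<otimes>\<^bsub>G1\<^esub> inv\<^bsub>G1\<^esub> (f12 w')"
    have "m [^]\<^bsub>G1\<^esub> p = \<one>\<^bsub>G1\<^esub>"
      unfolding m_def using m0 w w' by (simp add: g1.pow_div flip: f12s(5))
    moreover have "f01 m = x" unfolding m_def using m0 w' by simp
    moreover have "m \<in> carrier G1" unfolding m_def using m0 w' by simp
    ultimately show ?thesis by blast
  qed
  have L10: "\<exists>x\<in>carrier G0. x [^]\<^bsub>G0\<^esub> p = \<one>\<^bsub>G0\<^esub> \<and> f10 x = m"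
    if m: "m \<in> carrier G1" "m [^]\<^bsub>G1\<^esub> p = \<one>\<^bsub>G1\<^esub>" for m
  proof -
    have "f21 m [^]\<^bsub>G2\<^esub> p = \<one>\<^bsub>G2\<^esub>" using m by (simp flip: f21s(5))
    then have "f21 m = \<one>\<^bsub>G2\<^esub>" by (rule inj2[rotated]) (use m in simp)
    then obtain x0 where x0: "x0 \<in> carrier G0" "m = f10 x0" using x1 m by blast
    have "f10 (x0 [^]\<^bsub>G0\<^esub> p) = \<one>\<^bsub>G1\<^esub>" using m x0 by simp
    then obtain w where w: "w \<in> carrier G2" "x0 [^]\<^bsub>G0\<^esub> p = f02 w"
      using x3[OF g0.nat_pow_closed[OF x0(1)]] by blast
    obtain w' where w': "w' \<in> carrier G2" "w' [^]\<^bsub>G2\<^esub> p = w" using surj2[OF w(1)] by blast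
    define x where "x = x0 \<otimes>\<^bsub>G0\<^esub> inv\<^bsub>G0\<^esub> (f02 w')"
    have "x [^]\<^bsub>G0\<^esub> p = \<one>\<^bsub>G0\<^esub>"
      unfolding x_def using x0 w w' by (simp add: g0.pow_div flip: f02s(5))
    moreover have "f10 x = m" unfolding x_def using x0 w' by simp
    moreover have "x \<in> carrier G0" unfolding x_def using x0 w' by simp
    ultimately show ?thesis by blast
  qed
  have inj0: "x = \<one>\<^bsub>G0\<^esub>" if x: "x \<in> carrier G0" "x [^]\<^bsub>G0\<^esub> p = \<one>\<^bsub>G0\<^esub>" for x
  proof -
    obtain m where m: "m \<in> carrier G1" "m [^]\<^bsub>G1\<^esub> p = \<one>\<^bsub>G1\<^esub>" "f01 m = x" using L01[OF x] by blast
    obtain x' where x': "x' \<in> carrier G0" "x' [^]\<^bsub>G0\<^esub> p = \<one>\<^bsub>G0\<^esub>" "f10 x' = m" using L10[OF m(1,2)] by blast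
    have "f20 x' [^]\<^bsub>G2\<^esub> p = \<one>\<^bsub>G2\<^esub>" using x' by (simp flip: f20s(5))
    then have "f20 x' = \<one>\<^bsub>G2\<^esub>" by (rule inj2[rotated]) (use x' in simp)
    then have "normop p G0 (one_minus G0 (f02 \<circ> f20)) x' = x' [^]\<^bsub>G0\<^esub> p"
      using x' by (intro eU.N_fix) auto
    moreover have "f01 (f10 x') = normop p G0 (one_minus G0 (f02 \<circ> f20)) x'" using n0 x' by blast
    ultimately show ?thesis using x' m by simp
  qed
  have inj1: "m = \<one>\<^bsub>G1\<^esub>" if m: "m \<in> carrier G1" "m [^]\<^bsub>G1\<^esub> p = \<one>\<^bsub>G1\<^esub>" for m
  proof -
    obtain x' where x': "x' \<in> carrier G0" "x' [^]\<^bsub>G0\<^esub> p = \<one>\<^bsub>G0\<^esub>" "f10 x' = m" using L10[OF m] by blast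
    show ?thesis using inj0[OF x'(1,2)] x'(3) by simp
  qed
  have surj0: "\<exists>z\<in>carrier G0. z [^]\<^bsub>G0\<^esub> p = x" if x: "x \<in> carrier G0" for x
  proof -
    obtain w where w: "w \<in> carrier G2" "w [^]\<^bsub>G2\<^esub> p = f20 x" using surj2[OF f20s(1)[OF x]] by blast
    have "f12 w [^]\<^bsub>G1\<^esub> p = \<one>\<^bsub>G1\<^esub>" using w x by (simp flip: f12s(5))
    then have "f12 w = \<one>\<^bsub>G1\<^esub>" by (rule inj1[rotated]) (use w in simp)
    then obtain x3 where x3: "x3 \<in> carrier G0" "w = f20 x3" using x4 w by blast
    have c1: "x \<otimes>\<^bsub>G0\<^esub> inv\<^bsub>G0\<^esub> (x3 [^]\<^bsub>G0\<^esub> p) \<in> carrier G0" using x x3 by simp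
    have "f20 (x \<otimes>\<^bsub>G0\<^esub> inv\<^bsub>G0\<^esub> (x3 [^]\<^bsub>G0\<^esub> p)) = \<one>\<^bsub>G2\<^esub>" using x x3 w by simp
    then obtain m where m: "m \<in> carrier G1" "x \<otimes>\<^bsub>G0\<^esub> inv\<^bsub>G0\<^esub> (x3 [^]\<^bsub>G0\<^esub> p) = f01 m"
      using x6[OF c1] by blast
    obtain w4 where w4: "w4 \<in> carrier G2" "w4 [^]\<^bsub>G2\<^esub> p = f21 m" using surj2[OF f21s(1)[OF m(1)]] by blast
    have "f02 w4 [^]\<^bsub>G0\<^esub> p = \<one>\<^bsub>G0\<^esub>" using w4 m by (simp flip: f02s(5))
    then have "f02 w4 = \<one>\<^bsub>G0\<^esub>" by (rule inj0[rotated]) (use w4 in simp)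
    then obtain m5 where m5: "m5 \<in> carrier G1" "w4 = f21 m5" using x2 w4 by blast
    have c2: "m \<otimes>\<^bsub>G1\<^esub> inv\<^bsub>G1\<^esub> (m5 [^]\<^bsub>G1\<^esub> p) \<in> carrier G1" using m m5 by simp
    have "f21 (m \<otimes>\<^bsub>G1\<^esub> inv\<^bsub>G1\<^esub> (m5 [^]\<^bsub>G1\<^esub> p)) = \<one>\<^bsub>G2\<^esub>" using m m5 w4 by simp
    then obtain x6 where x6: "x6 \<in> carrier G0" "m \<otimes>\<^bsub>G1\<^esub> inv\<^bsub>G1\<^esub> (m5 [^]\<^bsub>G1\<^esub> p) = f10 x6"
      using x1[OF c2] by blast
    have mm: "m = f10 x6 \<otimes>\<^bsub>G1\<^esub> m5 [^]\<^bsub>G1\<^esub> p"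
      using x6(2) g1.inv_solve_right'[of "f10 x6" m "m5 [^]\<^bsub>G1\<^esub> p"] x6(1) m(1) m5(1) by simp
    have xx: "x = f01 m \<otimes>\<^bsub>G0\<^esub> x3 [^]\<^bsub>G0\<^esub> p"
      using m(2) g0.inv_solve_right'[of "f01 m" x "x3 [^]\<^bsub>G0\<^esub> p"] x3(1) m(1) x by simp
    obtain z where z: "z \<in> carrier G0" "normop p G0 (one_minus G0 (f02 \<circ> f20)) x6 = x6 [^]\<^bsub>G0\<^esub> p \<otimes>\<^bsub>G0\<^esub> (f02 \<circ> f20) z"
      using eU.N_form[OF x6(1)] by blast
    obtain w7 where w7: "w7 \<in> carrier G2" "w7 [^]\<^bsub>G2\<^esub> p = f20 z" using surj2[OF f20s(1)[OF z(1)]] by blast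
    have "f01 (f10 x6) = normop p G0 (one_minus G0 (f02 \<circ> f20)) x6" using n0 x6 by blast
    then have ff: "f01 (f10 x6) = x6 [^]\<^bsub>G0\<^esub> p \<otimes>\<^bsub>G0\<^esub> f02 w7 [^]\<^bsub>G0\<^esub> p"
      using z w7 by (simp flip: f02s(5))
    have eq: "x = (f01 m5 \<otimes>\<^bsub>G0\<^esub> (x6 \<otimes>\<^bsub>G0\<^esub> f02 w7) \<otimes>\<^bsub>G0\<^esub> x3) [^]\<^bsub>G0\<^esub> p"
      using xx mm ff x6 m5 w7 x3 by (simp add: g0.nat_pow_distrib g0.m_ac)
    have "f01 m5 \<otimes>\<^bsub>G0\<^esub> (x6 \<otimes>\<^bsub>G0\<^esub> f02 w7) \<otimes>\<^bsub>G0\<^esub> x3 \<in> carrier G0" using x6 m5 w7 x3 by simp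
    then show ?thesis using eq by blast
  qed
  show ?thesis using upd_iff[OF cg0] inj0 surj0 by blast
qed

end

lemma gg_cg: "graded_group G \<Longrightarrow> comm_group G"
  by (simp add: graded_group_def)
lemma gg_ev: "graded_group G \<Longrightarrow> subgroup (ev_part G) G"
  by (simp add: graded_group_def)
lemma gg_od: "graded_group G \<Longrightarrow> subgroup (od_part G) G"
  by (simp add: graded_group_def)
lemma gg_ev_c: "graded_group G \<Longrightarrow> a \<in> ev_part G \<Longrightarrow> a \<in> carrier G"
  by (rule subgroup.mem_carrier[OF gg_ev])
lemma gg_od_c: "graded_group G \<Longrightarrow> a \<in> od_part G \<Longrightarrow> a \<in> carrier G"
  by (rule subgroup.mem_carrier[OF gg_od])

lemma gg_decomp: "graded_group G \<Longrightarrow> x \<in> carrier G \<Longrightarrow> \<exists>a b. a \<in> ev_part G \<and> b \<in> od_part G \<and> x = a \<otimes>\<^bsub>G\<^esub> b"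
proof -
  assume G: "graded_group G" and x: "x \<in> carrier G"
  then have "\<exists>!ab. fst ab \<in> ev_part G \<and> snd ab \<in> od_part G \<and> x = fst ab \<otimes>\<^bsub>G\<^esub> snd ab"
    unfolding graded_group_def by blast
  then obtain ab where "fst ab \<in> ev_part G \<and> snd ab \<in> od_part G \<and> x = fst ab \<otimes>\<^bsub>G\<^esub> snd ab"
    by (rule ex1E)
  then show ?thesis by blast
qed

lemma gg_unique:
  fixes G (structure)
  assumes G: "graded_group G" and ab: "a \<in> ev_part G" "b \<in> od_part G" "a' \<in> ev_part G" "b' \<in> od_part G"
    and eq: "a \<otimes>\<^bsub>G\<^esub> b = a' \<otimes>\<^bsub>G\<^esub> b'"
  shows "a = a' \<and> b = b'"
proof -
  interpret comm_group G using gg_cg[OF G] .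
  have c: "a \<otimes> b \<in> carrier G" using ab gg_ev_c[OF G] gg_od_c[OF G] by simp
  have "\<exists>!ab. fst ab \<in> ev_part G \<and> snd ab \<in> od_part G \<and> a \<otimes> b = fst ab \<otimes> snd ab"
    using G c unfolding graded_group_def by blast
  then have "(a, b) = (a', b')" using ab eq by (metis fst_conv snd_conv)
  then show ?thesis by simp
qed

lemma gg_one_decomp:
  fixes G (structure)
  assumes G: "graded_group G" and ab: "a \<in> ev_part G" "b \<in> od_part G" and eq: "a \<otimes>\<^bsub>G\<^esub> b = \<one>\<^bsub>G\<^esub>"
  shows "a = \<one>\<^bsub>G\<^esub> \<and> b = \<one>\<^bsub>G\<^esub>"
proof -
  interpret comm_group G using gg_cg[OF G] .
  have "\<one> \<in> ev_part G" "\<one> \<in> od_part G" using gg_ev[OF G] gg_od[OF G] subgroup.one_closed by blast+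
  then show ?thesis using gg_unique[OF G ab, of \<one> \<one>] eq by simp
qed

lemma subgroup_pow_closed: "subgroup H G \<Longrightarrow> x \<in> H \<Longrightarrow> x [^]\<^bsub>G\<^esub> (n::nat) \<in> H"
  by (induction n) (auto simp: subgroup.one_closed subgroup.m_closed)

lemma gpres_hom: "gpres G H f \<Longrightarrow> f \<in> hom G H" by (simp add: gpres_def)
lemma grev_hom: "grev G H f \<Longrightarrow> f \<in> hom G H" by (simp add: grev_def)

lemma ker_subgroup:
  assumes "group G" "group H" "h \<in> hom G H"
  shows "subgroup {x \<in> carrier G. h x = \<one>\<^bsub>H\<^esub>} G"
proof -
  interpret G: group G by fact
  interpret H: group H by fact
  show ?thesis
    by (rule subgroup.intro) (auto simp: hom_facts[OF assms])
qed

definition compclosed :: "'a gmonoid \<Rightarrow> 'a set \<Rightarrow> bool" where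
  "compclosed G S \<longleftrightarrow> (\<forall>x\<in>S. \<forall>a\<in>ev_part G. \<forall>b\<in>od_part G. x = a \<otimes>\<^bsub>G\<^esub> b \<longrightarrow> a \<in> S \<and> b \<in> S)"

lemma ker_compclosed:
  assumes G: "graded_group G" and H: "graded_group H" and h: "h \<in> hom G H"
    and gr: "(h ` ev_part G \<subseteq> ev_part H \<and> h ` od_part G \<subseteq> od_part H) \<or>
             (h ` ev_part G \<subseteq> od_part H \<and> h ` od_part G \<subseteq> ev_part H)"
  shows "compclosed G {x \<in> carrier G. h x = \<one>\<^bsub>H\<^esub>}"
  unfolding compclosed_def
proof (intro ballI impI)
  fix x a b assume x: "x \<in> {x \<in> carrier G. h x = \<one>\<^bsub>H\<^esub>}" and a: "a \<in> ev_part G" and b: "b \<in> od_part G"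
    and xab: "x = a \<otimes>\<^bsub>G\<^esub> b"
  have gG: "group G" using gg_cg[OF G] comm_group.axioms(2) by blast
  have gH: "group H" using gg_cg[OF H] comm_group.axioms(2) by blast
  have ac: "a \<in> carrier G" and bc: "b \<in> carrier G" using a b gg_ev_c[OF G] gg_od_c[OF G] by auto
  have e: "h a \<otimes>\<^bsub>H\<^esub> h b = \<one>\<^bsub>H\<^esub>" using x xab hom_facts(2)[OF gG gH h ac bc] by simp
  have "h a = \<one>\<^bsub>H\<^esub> \<and> h b = \<one>\<^bsub>H\<^esub>"
  proof (cases "h ` ev_part G \<subseteq> ev_part H \<and> h ` od_part G \<subseteq> od_part H")
    case True
    then show ?thesis using gg_one_decomp[OF H _ _ e] a b by blast
  next
    case False
    then have g: "h ` ev_part G \<subseteq> od_part H \<and> h ` od_part G \<subseteq> ev_part H" using gr by blast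
    have "h b \<otimes>\<^bsub>H\<^esub> h a = \<one>\<^bsub>H\<^esub>"
      using e comm_monoid.m_comm[OF comm_group.axioms(1)[OF gg_cg[OF H]]] hom_facts(1)[OF gG gH h] ac bc by metis
    then show ?thesis using gg_one_decomp[OF H _ _] g a b by blast
  qed
  then show "a \<in> {x \<in> carrier G. h x = \<one>\<^bsub>H\<^esub>} \<and> b \<in> {x \<in> carrier G. h x = \<one>\<^bsub>H\<^esub>}"
    using ac bc by simp
qed

definition subgm :: "'a gmonoid \<Rightarrow> 'a set \<Rightarrow> 'a gmonoid" where
  "subgm G S = G\<lparr>carrier := S, ev_part := ev_part G \<inter> S, od_part := od_part G \<inter> S\<rparr>"

lemma subgm_simps[simp]:
  "carrier (subgm G S) = S" "monoid.mult (subgm G S) = monoid.mult G" "monoid.one (subgm G S) = monoid.one G"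
  "ev_part (subgm G S) = ev_part G \<inter> S" "od_part (subgm G S) = od_part G \<inter> S"
  by (simp_all add: subgm_def)

lemma subgm_cg:
  fixes G (structure)
  assumes G: "comm_group G" and S: "subgroup S G"
  shows "comm_group (subgm G S)"
proof -
  interpret comm_group G by fact
  interpret subgroup S G by fact
  show ?thesis
  proof (rule comm_groupI)
    fix x y z assume "x \<in> carrier (subgm G S)" "y \<in> carrier (subgm G S)" "z \<in> carrier (subgm G S)"
    then show "x \<otimes>\<^bsub>subgm G S\<^esub> y \<otimes>\<^bsub>subgm G S\<^esub> z = x \<otimes>\<^bsub>subgm G S\<^esub> (y \<otimes>\<^bsub>subgm G S\<^esub> z)"
      by (simp add: m_assoc)
  next
    fix x y assume "x \<in> carrier (subgm G S)" "y \<in> carrier (subgm G S)"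
    then show "x \<otimes>\<^bsub>subgm G S\<^esub> y = y \<otimes>\<^bsub>subgm G S\<^esub> x"
      by (simp add: m_comm)
  next
    fix x assume x: "x \<in> carrier (subgm G S)"
    then show "\<exists>y\<in>carrier (subgm G S). y \<otimes>\<^bsub>subgm G S\<^esub> x = \<one>\<^bsub>subgm G S\<^esub>"
      by (intro bexI[of _ "inv x"]) auto
  qed auto
qed

lemma subgm_inv:
  fixes G (structure)
  assumes G: "comm_group G" and S: "subgroup S G" and x: "x \<in> S"
  shows "inv\<^bsub>subgm G S\<^esub> x = inv\<^bsub>G\<^esub> x"
proof -
  interpret comm_group G by fact
  interpret subgroup S G by fact
  interpret H: comm_group "subgm G S" using subgm_cg[OF G S] .
  show ?thesis using x by (intro H.inv_equality) auto
qed

lemma subgm_pow[simp]: "x [^]\<^bsub>subgm G S\<^esub> (n::nat) = x [^]\<^bsub>G\<^esub> n"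
  by (induction n) auto

lemma subgm_finprod:
  assumes G: "comm_group G" and S: "subgroup S G" and g: "\<And>i. g i \<in> S"
  shows "finprod (subgm G S) g {..<n} = finprod G g {..<(n::nat)}"
proof (induction n)
  case 0
  have "finprod (subgm G S) g {} = \<one>\<^bsub>subgm G S\<^esub>"
    by (rule comm_monoid.finprod_empty[OF comm_group.axioms(1)[OF subgm_cg[OF G S]]])
  moreover have "finprod G g {} = \<one>\<^bsub>G\<^esub>"
    by (rule comm_monoid.finprod_empty[OF comm_group.axioms(1)[OF G]])
  ultimately show ?case by simp
next
  case (Suc n)
  have gS: "\<And>i. g i \<in> carrier (subgm G S)" using g by simp
  have gG: "\<And>i. g i \<in> carrier G" using g subgroup.mem_carrier[OF S] by blast
  have "finprod (subgm G S) g {..<Suc n} = g n \<otimes>\<^bsub>subgm G S\<^esub> finprod (subgm G S) g {..<n}"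
    by (rule comm_monoid.finprod_lessThan_Suc[OF comm_group.axioms(1)[OF subgm_cg[OF G S]] gS])
  also have "\<dots> = g n \<otimes>\<^bsub>G\<^esub> finprod G g {..<n}" using Suc.IH by simp
  also have "\<dots> = finprod G g {..<Suc n}"
    by (rule comm_monoid.finprod_lessThan_Suc[OF comm_group.axioms(1)[OF G] gG, symmetric])
  finally show ?case .
qed

lemma subgm_gg:
  fixes G (structure)
  assumes G: "graded_group G" and S: "subgroup S G" and cc: "compclosed G S"
  shows "graded_group (subgm G S)"
proof -
  have cG: "comm_group G" using gg_cg[OF G] .
  interpret comm_group G by fact
  interpret subgroup S G by fact
  have sgE: "subgroup (ev_part G) G" and sgO: "subgroup (od_part G) G" using G gg_ev gg_od by auto
  have "subgroup (ev_part G \<inter> S) (subgm G S)"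
  proof (rule subgroup.intro)
    show "ev_part G \<inter> S \<subseteq> carrier (subgm G S)" by auto
  next
    fix x y assume "x \<in> ev_part G \<inter> S" "y \<in> ev_part G \<inter> S"
    then show "x \<otimes>\<^bsub>subgm G S\<^esub> y \<in> ev_part G \<inter> S" using subgroup.m_closed[OF sgE] by simp
  next
    show "\<one>\<^bsub>subgm G S\<^esub> \<in> ev_part G \<inter> S" using subgroup.one_closed[OF sgE] by simp
  next
    fix x assume "x \<in> ev_part G \<inter> S"
    then show "inv\<^bsub>subgm G S\<^esub> x \<in> ev_part G \<inter> S"
      using subgm_inv[OF cG S] subgroup.m_inv_closed[OF sgE] by simp
  qed
  moreover have "subgroup (od_part G \<inter> S) (subgm G S)"
  proof (rule subgroup.intro)
    show "od_part G \<inter> S \<subseteq> carrier (subgm G S)" by auto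
  next
    fix x y assume "x \<in> od_part G \<inter> S" "y \<in> od_part G \<inter> S"
    then show "x \<otimes>\<^bsub>subgm G S\<^esub> y \<in> od_part G \<inter> S" using subgroup.m_closed[OF sgO] by simp
  next
    show "\<one>\<^bsub>subgm G S\<^esub> \<in> od_part G \<inter> S" using subgroup.one_closed[OF sgO] by simp
  next
    fix x assume "x \<in> od_part G \<inter> S"
    then show "inv\<^bsub>subgm G S\<^esub> x \<in> od_part G \<inter> S"
      using subgm_inv[OF cG S] subgroup.m_inv_closed[OF sgO] by simp
  qed
  moreover have "\<exists>!ab. fst ab \<in> ev_part G \<inter> S \<and> snd ab \<in> od_part G \<inter> S \<and> x = fst ab \<otimes> snd ab"
    if x: "x \<in> S" for x
  proof -
    obtain a b where ab: "a \<in> ev_part G" "b \<in> od_part G" "x = a \<otimes> b" using gg_decomp[OF G mem_carrier[OF x]] by blast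
    have abS': "a \<in> S \<and> b \<in> S" using cc[unfolded compclosed_def, rule_format, OF x ab(1) ab(2) ab(3)] .
    then have abS: "a \<in> S" "b \<in> S" by auto
    show ?thesis
    proof (rule ex1I[of _ "(a, b)"])
      show "fst (a, b) \<in> ev_part G \<inter> S \<and> snd (a, b) \<in> od_part G \<inter> S \<and> x = fst (a, b) \<otimes> snd (a, b)"
        using ab abS by simp
    next
      fix ab' assume h: "fst ab' \<in> ev_part G \<inter> S \<and> snd ab' \<in> od_part G \<inter> S \<and> x = fst ab' \<otimes> snd ab'"
      then have h1: "fst ab' \<in> ev_part G" "snd ab' \<in> od_part G" "fst ab' \<otimes> snd ab' = a \<otimes> b"
        using ab by auto
      have "fst ab' = a \<and> snd ab' = b" using gg_unique[OF G h1(1,2) ab(1,2) h1(3)] .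
      then show "ab' = (a, b)" by (simp add: prod_eq_iff)
    qed
  qed
  ultimately show ?thesis using subgm_cg[OF cG S] unfolding graded_group_def subgm_simps by blast
qed

definition pdiv :: "nat \<Rightarrow> ('a, 'm) monoid_scheme \<Rightarrow> 'a \<Rightarrow> 'a" where
  "pdiv p G y = (THE x. x \<in> carrier G \<and> x [^]\<^bsub>G\<^esub> p = y)"

locale updg = comm_group G for G (structure) +
  fixes p :: nat assumes upd: "upd p G"
begin

lemma inj_p: "x \<in> carrier G \<Longrightarrow> x [^] p = \<one> \<Longrightarrow> x = \<one>"
  using upd upd_iff[OF comm_group_axioms] by blast

lemma surj_p: "y \<in> carrier G \<Longrightarrow> \<exists>x\<in>carrier G. x [^] p = y"
  using upd upd_iff[OF comm_group_axioms] by blast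

lemma pow_inj: "x \<in> carrier G \<Longrightarrow> y \<in> carrier G \<Longrightarrow> x [^] p = y [^] p \<Longrightarrow> x = y"
  using upd unfolding upd_def bij_betw_def inj_on_def by blast

lemma pdiv_eq: "x \<in> carrier G \<Longrightarrow> x [^] p = y \<Longrightarrow> pdiv p G y = x"
  unfolding pdiv_def using pow_inj by (intro the_equality) auto

lemma pdiv_both: "y \<in> carrier G \<Longrightarrow> pdiv p G y \<in> carrier G \<and> pdiv p G y [^] p = y"
proof -
  assume y: "y \<in> carrier G"
  obtain x where x: "x \<in> carrier G" "x [^] p = y" using surj_p[OF y] by blast
  then have "pdiv p G y = x" by (rule pdiv_eq)
  then show ?thesis using x by simp
qed

lemma pdiv_closed[simp]: "y \<in> carrier G \<Longrightarrow> pdiv p G y \<in> carrier G"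
  using pdiv_both by blast

lemma pdiv_pow[simp]: "y \<in> carrier G \<Longrightarrow> pdiv p G y [^] p = y"
  using pdiv_both by blast

lemma pdiv_of_pow[simp]: "x \<in> carrier G \<Longrightarrow> pdiv p G (x [^] p) = x"
  using pdiv_eq by blast

lemma pdiv_one[simp]: "pdiv p G \<one> = \<one>"
  using pdiv_eq[of \<one> \<one>] by simp

lemma pdiv_mult: "x \<in> carrier G \<Longrightarrow> y \<in> carrier G \<Longrightarrow> pdiv p G (x \<otimes> y) = pdiv p G x \<otimes> pdiv p G y"
  by (intro pdiv_eq) (auto simp: nat_pow_distrib)

lemma pdiv_hom: "pdiv p G \<in> hom G G"
  by (intro homI) (auto simp: pdiv_mult)

end

lemma pdiv_ev:
  fixes G (structure)
  assumes G: "graded_group G" and u: "upd p G" and y: "y \<in> ev_part G"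
  shows "pdiv p G y \<in> ev_part G"
proof -
  interpret updg G p using gg_cg[OF G] u by (simp add: updg_def updg_axioms_def)
  have yc: "y \<in> carrier G" using gg_ev_c[OF G y] .
  obtain a b where ab: "a \<in> ev_part G" "b \<in> od_part G" "pdiv p G y = a \<otimes> b"
    using gg_decomp[OF G pdiv_closed[OF yc]] by blast
  have ac: "a \<in> carrier G" and bc: "b \<in> carrier G" using ab gg_ev_c[OF G] gg_od_c[OF G] by auto
  have "y = (a \<otimes> b) [^] p" using ab(3) pdiv_pow[OF yc] by simp
  also have "\<dots> = a [^] p \<otimes> b [^] p" using ac bc by (rule nat_pow_distrib)
  finally have e: "a [^] p \<otimes> b [^] p = y \<otimes> \<one>" using yc by simp
  have "a [^] p \<in> ev_part G" "b [^] p \<in> od_part G"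
    using subgroup_pow_closed[OF gg_ev[OF G] ab(1)] subgroup_pow_closed[OF gg_od[OF G] ab(2)] by auto
  moreover have "\<one> \<in> od_part G" using subgroup.one_closed[OF gg_od[OF G]] by simp
  ultimately have "b [^] p = \<one>" using gg_unique[OF G _ _ y _ e] by blast
  then have "b = \<one>" using inj_p[OF bc] by blast
  then show ?thesis using ab ac by simp
qed

lemma pdiv_od:
  fixes G (structure)
  assumes G: "graded_group G" and u: "upd p G" and y: "y \<in> od_part G"
  shows "pdiv p G y \<in> od_part G"
proof -
  interpret updg G p using gg_cg[OF G] u by (simp add: updg_def updg_axioms_def)
  have yc: "y \<in> carrier G" using gg_od_c[OF G y] .
  obtain a b where ab: "a \<in> ev_part G" "b \<in> od_part G" "pdiv p G y = a \<otimes> b"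
    using gg_decomp[OF G pdiv_closed[OF yc]] by blast
  have ac: "a \<in> carrier G" and bc: "b \<in> carrier G" using ab gg_ev_c[OF G] gg_od_c[OF G] by auto
  have "y = (a \<otimes> b) [^] p" using ab(3) pdiv_pow[OF yc] by simp
  also have "\<dots> = a [^] p \<otimes> b [^] p" using ac bc by (rule nat_pow_distrib)
  finally have e: "a [^] p \<otimes> b [^] p = \<one> \<otimes> y" using yc by simp
  have "a [^] p \<in> ev_part G" "b [^] p \<in> od_part G"
    using subgroup_pow_closed[OF gg_ev[OF G] ab(1)] subgroup_pow_closed[OF gg_od[OF G] ab(2)] by auto
  moreover have "\<one> \<in> ev_part G" using subgroup.one_closed[OF gg_ev[OF G]] by simp
  ultimately have "a [^] p = \<one>" using gg_unique[OF G _ _ _ y e] by blast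
  then have "a = \<one>" using inj_p[OF ac] by blast
  then show ?thesis using ab bc by simp
qed

lemma gsum_simps[simp]:
  "carrier (gsum G H) = carrier G \<times> carrier H"
  "u \<otimes>\<^bsub>gsum G H\<^esub> v = (fst u \<otimes>\<^bsub>G\<^esub> fst v, snd u \<otimes>\<^bsub>H\<^esub> snd v)"
  "\<one>\<^bsub>gsum G H\<^esub> = (\<one>\<^bsub>G\<^esub>, \<one>\<^bsub>H\<^esub>)"
  "ev_part (gsum G H) = ev_part G \<times> ev_part H"
  "od_part (gsum G H) = od_part G \<times> od_part H"
  by (simp_all add: gsum_def)

lemma gsum_cg:
  assumes G: "comm_group G" and H: "comm_group H"
  shows "comm_group (gsum G H)"
proof -
  interpret G: comm_group G by fact
  interpret H: comm_group H by fact
  show ?thesis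
  proof (rule comm_groupI)
    fix x y z assume "x \<in> carrier (gsum G H)" "y \<in> carrier (gsum G H)" "z \<in> carrier (gsum G H)"
    then show "x \<otimes>\<^bsub>gsum G H\<^esub> y \<otimes>\<^bsub>gsum G H\<^esub> z = x \<otimes>\<^bsub>gsum G H\<^esub> (y \<otimes>\<^bsub>gsum G H\<^esub> z)"
      by (auto simp: G.m_assoc H.m_assoc)
  next
    fix x y assume "x \<in> carrier (gsum G H)" "y \<in> carrier (gsum G H)"
    then show "x \<otimes>\<^bsub>gsum G H\<^esub> y = y \<otimes>\<^bsub>gsum G H\<^esub> x"
      by (auto simp: G.m_comm H.m_comm)
  next
    fix x assume x: "x \<in> carrier (gsum G H)"
    then show "\<exists>y\<in>carrier (gsum G H). y \<otimes>\<^bsub>gsum G H\<^esub> x = \<one>\<^bsub>gsum G H\<^esub>"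
      by (intro bexI[of _ "(inv\<^bsub>G\<^esub> (fst x), inv\<^bsub>H\<^esub> (snd x))"]) auto
  qed (auto simp: prod_eq_iff)
qed

lemma gsum_inv:
  assumes G: "comm_group G" and H: "comm_group H" and a: "a \<in> carrier G" and b: "b \<in> carrier H"
  shows "inv\<^bsub>gsum G H\<^esub> (a, b) = (inv\<^bsub>G\<^esub> a, inv\<^bsub>H\<^esub> b)"
proof -
  interpret G: comm_group G by fact
  interpret H: comm_group H by fact
  interpret S: comm_group "gsum G H" using gsum_cg[OF G H] .
  show ?thesis using a b by (intro S.inv_equality) auto
qed

lemma gsum_pow[simp]: "(a, b) [^]\<^bsub>gsum G H\<^esub> (n::nat) = (a [^]\<^bsub>G\<^esub> n, b [^]\<^bsub>H\<^esub> n)"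
  by (induction n) auto

lemma gsum_gg:
  assumes G: "graded_group G" and H: "graded_group H"
  shows "graded_group (gsum G H)"
proof -
  have cG: "comm_group G" and cH: "comm_group H" using G H gg_cg by auto
  have sg: "subgroup (A \<times> B) (gsum G H)" if A: "subgroup A G" and B: "subgroup B H" for A B
  proof (rule subgroup.intro)
    show "A \<times> B \<subseteq> carrier (gsum G H)" using subgroup.subset[OF A] subgroup.subset[OF B] by auto
  next
    fix x y assume "x \<in> A \<times> B" "y \<in> A \<times> B"
    then show "x \<otimes>\<^bsub>gsum G H\<^esub> y \<in> A \<times> B" using subgroup.m_closed[OF A] subgroup.m_closed[OF B] by auto
  next
    show "\<one>\<^bsub>gsum G H\<^esub> \<in> A \<times> B" using subgroup.one_closed[OF A] subgroup.one_closed[OF B] by auto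
  next
    fix x assume x: "x \<in> A \<times> B"
    then obtain a b where ab: "x = (a, b)" "a \<in> A" "b \<in> B" by blast
    have "inv\<^bsub>gsum G H\<^esub> x = (inv\<^bsub>G\<^esub> a, inv\<^bsub>H\<^esub> b)"
      using ab gsum_inv[OF cG cH] subgroup.mem_carrier[OF A] subgroup.mem_carrier[OF B] by simp
    then show "inv\<^bsub>gsum G H\<^esub> x \<in> A \<times> B"
      using ab subgroup.m_inv_closed[OF A] subgroup.m_inv_closed[OF B] by simp
  qed
  have u: "\<exists>!ab. fst ab \<in> ev_part (gsum G H) \<and> snd ab \<in> od_part (gsum G H) \<and>
            x = fst ab \<otimes>\<^bsub>gsum G H\<^esub> snd ab" if x: "x \<in> carrier (gsum G H)" for x
  proof -
    note gsum_simps(4,5)[simp]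
    have x1: "fst x \<in> carrier G" and x2: "snd x \<in> carrier H" using x by auto
    obtain a1 b1 where ab1: "a1 \<in> ev_part G" "b1 \<in> od_part G" "fst x = a1 \<otimes>\<^bsub>G\<^esub> b1"
      using gg_decomp[OF G x1] by blast
    obtain a2 b2 where ab2: "a2 \<in> ev_part H" "b2 \<in> od_part H" "snd x = a2 \<otimes>\<^bsub>H\<^esub> b2"
      using gg_decomp[OF H x2] by blast
    show ?thesis
    proof (rule ex1I[of _ "((a1, a2), (b1, b2))"])
      show "fst ((a1, a2), b1, b2) \<in> ev_part (gsum G H) \<and> snd ((a1, a2), b1, b2) \<in> od_part (gsum G H) \<and>
            x = fst ((a1, a2), b1, b2) \<otimes>\<^bsub>gsum G H\<^esub> snd ((a1, a2), b1, b2)"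
        using ab1 ab2 by (simp add: prod_eq_iff)
    next
      fix ab assume h: "fst ab \<in> ev_part (gsum G H) \<and> snd ab \<in> od_part (gsum G H) \<and>
            x = fst ab \<otimes>\<^bsub>gsum G H\<^esub> snd ab"
      have h1: "fst (fst ab) \<in> ev_part G" "snd (fst ab) \<in> ev_part H" "fst (snd ab) \<in> od_part G" "snd (snd ab) \<in> od_part H"
        using h by auto
      have h2: "fst (fst ab) \<otimes>\<^bsub>G\<^esub> fst (snd ab) = a1 \<otimes>\<^bsub>G\<^esub> b1"
        "snd (fst ab) \<otimes>\<^bsub>H\<^esub> snd (snd ab) = a2 \<otimes>\<^bsub>H\<^esub> b2" using h ab1(3) ab2(3) by auto
      have "fst (fst ab) = a1 \<and> fst (snd ab) = b1" using gg_unique[OF G h1(1) h1(3) ab1(1,2) h2(1)] .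
      moreover have "snd (fst ab) = a2 \<and> snd (snd ab) = b2" using gg_unique[OF H h1(2) h1(4) ab2(1,2) h2(2)] .
      ultimately show "ab = ((a1, a2), b1, b2)" by (simp add: prod_eq_iff)
    qed
  qed
  have "subgroup (ev_part (gsum G H)) (gsum G H)" "subgroup (od_part (gsum G H)) (gsum G H)"
    using sg[OF gg_ev[OF G] gg_ev[OF H]] sg[OF gg_od[OF G] gg_od[OF H]] by simp_all
  then show ?thesis unfolding graded_group_def
    using gsum_cg[OF cG cH] u by blast
qed

lemma gshift_simps[simp]:
  "carrier (gshift G) = carrier G"
  "monoid.mult (gshift G) = monoid.mult G"
  "monoid.one (gshift G) = monoid.one G"
  "ev_part (gshift G) = od_part G"
  "od_part (gshift G) = ev_part G"
  by (simp_all add: gshift_def)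

lemma gshift_inv[simp]: "inv\<^bsub>gshift G\<^esub> x = inv\<^bsub>G\<^esub> x"
  by (simp add: m_inv_def)

lemma gshift_pow[simp]: "x [^]\<^bsub>gshift G\<^esub> (n::nat) = x [^]\<^bsub>G\<^esub> n"
  by (induction n) auto

lemma gshift_cg:
  fixes G (structure)
  assumes "comm_group G" shows "comm_group (gshift G)"
proof -
  interpret comm_group G by fact
  show ?thesis
  proof (rule comm_groupI)
    fix x y z assume "x \<in> carrier (gshift G)" "y \<in> carrier (gshift G)" "z \<in> carrier (gshift G)"
    then show "x \<otimes>\<^bsub>gshift G\<^esub> y \<otimes>\<^bsub>gshift G\<^esub> z = x \<otimes>\<^bsub>gshift G\<^esub> (y \<otimes>\<^bsub>gshift G\<^esub> z)"
      by (simp add: m_assoc)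
  next
    fix x y assume "x \<in> carrier (gshift G)" "y \<in> carrier (gshift G)"
    then show "x \<otimes>\<^bsub>gshift G\<^esub> y = y \<otimes>\<^bsub>gshift G\<^esub> x"
      by (simp add: m_comm)
  next
    fix x assume x: "x \<in> carrier (gshift G)"
    then show "\<exists>y\<in>carrier (gshift G). y \<otimes>\<^bsub>gshift G\<^esub> x = \<one>\<^bsub>gshift G\<^esub>"
      by (intro bexI[of _ "inv x"]) auto
  qed auto
qed

lemma gshift_subgroup: "subgroup A G \<Longrightarrow> subgroup A (gshift G)"
  by (rule subgroup.intro) (auto simp: subgroup.subset subgroup.m_closed subgroup.one_closed subgroup.m_inv_closed)

lemma gshift_gg:
  assumes G: "graded_group G"
  shows "graded_group (gshift G)"
proof -
  have cG: "comm_group G" using gg_cg[OF G] .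
  have u: "\<exists>!ab. fst ab \<in> od_part G \<and> snd ab \<in> ev_part G \<and> x = fst ab \<otimes>\<^bsub>G\<^esub> snd ab"
    if x: "x \<in> carrier G" for x
  proof -
    obtain a b where ab: "a \<in> ev_part G" "b \<in> od_part G" "x = a \<otimes>\<^bsub>G\<^esub> b" using gg_decomp[OF G x] by blast
    have comm: "a \<otimes>\<^bsub>G\<^esub> b = b \<otimes>\<^bsub>G\<^esub> a"
      using comm_monoid.m_comm[OF comm_group.axioms(1)[OF cG]] gg_ev_c[OF G ab(1)] gg_od_c[OF G ab(2)] by blast
    show ?thesis
    proof (rule ex1I[of _ "(b, a)"])
      show "fst (b, a) \<in> od_part G \<and> snd (b, a) \<in> ev_part G \<and> x = fst (b, a) \<otimes>\<^bsub>G\<^esub> snd (b, a)"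
        using ab comm by simp
    next
      fix ab' assume h: "fst ab' \<in> od_part G \<and> snd ab' \<in> ev_part G \<and> x = fst ab' \<otimes>\<^bsub>G\<^esub> snd ab'"
      have c2: "fst ab' \<otimes>\<^bsub>G\<^esub> snd ab' = snd ab' \<otimes>\<^bsub>G\<^esub> fst ab'"
        using comm_monoid.m_comm[OF comm_group.axioms(1)[OF cG]] h gg_ev_c[OF G] gg_od_c[OF G] by blast
      have "snd ab' \<otimes>\<^bsub>G\<^esub> fst ab' = a \<otimes>\<^bsub>G\<^esub> b" using h ab(3) c2 by simp
      then have "snd ab' = a \<and> fst ab' = b" using gg_unique[OF G _ _ ab(1,2)] h by blast
      then show "ab' = (b, a)" by (simp add: prod_eq_iff)
    qed
  qed
  show ?thesis unfolding graded_group_def gshift_simps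
    using gshift_cg[OF cG] gshift_subgroup[OF gg_ev[OF G]] gshift_subgroup[OF gg_od[OF G]] u
    by (simp add: gshift_def)
qed

lemma inv_gpres:
  assumes G: "graded_group G" and H: "graded_group H" and g: "gpres G H g"
    and b: "bij_betw g (carrier G) (carrier H)"
  shows "gpres H G (inv_into (carrier G) g)"
proof -
  define f where "f = inv_into (carrier G) g"
  have cG: "comm_group G" and cH: "comm_group H" using G H gg_cg by auto
  have gG: "group G" and gH: "group H" using cG cH comm_group.axioms(2) by auto
  have gh: "g \<in> hom G H" using g gpres_hom by blast
  note gf = hom_facts[OF gG gH gh]
  have fr: "f y \<in> carrier G" "g (f y) = y" if "y \<in> carrier H" for y
    using that b unfolding f_def by (auto simp: bij_betw_def intro: inv_into_into f_inv_into_f)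
  have fl: "f (g x) = x" if "x \<in> carrier G" for x
    using that b unfolding f_def bij_betw_def by (simp add: inv_into_f_f)
  have fm: "f (x \<otimes>\<^bsub>H\<^esub> y) = f x \<otimes>\<^bsub>G\<^esub> f y" if "x \<in> carrier H" "y \<in> carrier H" for x y
  proof -
    have "g (f x \<otimes>\<^bsub>G\<^esub> f y) = x \<otimes>\<^bsub>H\<^esub> y" using that fr gf(2) by simp
    then have "f (x \<otimes>\<^bsub>H\<^esub> y) = f (g (f x \<otimes>\<^bsub>G\<^esub> f y))" by simp
    also have "\<dots> = f x \<otimes>\<^bsub>G\<^esub> f y" using fl comm_groupE(1)[OF cG fr(1)[OF that(1)] fr(1)[OF that(2)]] by blast
    finally show ?thesis .
  qed
  have fh: "f \<in> hom H G" by (rule homI) (auto simp: fr fm)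
  have f1: "f \<one>\<^bsub>H\<^esub> = \<one>\<^bsub>G\<^esub>" using fl[of "\<one>\<^bsub>G\<^esub>"] gf(3) comm_groupE(2)[OF cG] by simp
  have ev: "f y \<in> ev_part G" if y: "y \<in> ev_part H" for y
  proof -
    have yc: "y \<in> carrier H" using gg_ev_c[OF H y] .
    obtain a b where ab: "a \<in> ev_part G" "b \<in> od_part G" "f y = a \<otimes>\<^bsub>G\<^esub> b"
      using gg_decomp[OF G fr(1)[OF yc]] by blast
    have ac: "a \<in> carrier G" and bc: "b \<in> carrier G" using ab gg_ev_c[OF G] gg_od_c[OF G] by auto
    have e: "g a \<otimes>\<^bsub>H\<^esub> g b = y \<otimes>\<^bsub>H\<^esub> \<one>\<^bsub>H\<^esub>"
      using ab(3) fr[OF yc] gf(2)[OF ac bc] yc comm_groupE(5)[OF cH] comm_groupE(4)[OF cH] comm_groupE(2)[OF cH]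
      by metis
    have "g a \<in> ev_part H" "g b \<in> od_part H" using g ab unfolding gpres_def by auto
    moreover have "\<one>\<^bsub>H\<^esub> \<in> od_part H" using subgroup.one_closed[OF gg_od[OF H]] by simp
    ultimately have "g b = \<one>\<^bsub>H\<^esub>" using gg_unique[OF H _ _ y _ e] by blast
    then have "b = \<one>\<^bsub>G\<^esub>" using fl[OF bc] f1 by simp
    then show ?thesis using ab ac comm_groupE(5)[OF cG] comm_groupE(4)[OF cG] comm_groupE(2)[OF cG] by metis
  qed
  have od: "f y \<in> od_part G" if y: "y \<in> od_part H" for y
  proof -
    have yc: "y \<in> carrier H" using gg_od_c[OF H y] .
    obtain a b where ab: "a \<in> ev_part G" "b \<in> od_part G" "f y = a \<otimes>\<^bsub>G\<^esub> b"
      using gg_decomp[OF G fr(1)[OF yc]] by blast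
    have ac: "a \<in> carrier G" and bc: "b \<in> carrier G" using ab gg_ev_c[OF G] gg_od_c[OF G] by auto
    have e: "g a \<otimes>\<^bsub>H\<^esub> g b = \<one>\<^bsub>H\<^esub> \<otimes>\<^bsub>H\<^esub> y"
      using ab(3) fr[OF yc] gf(2)[OF ac bc] yc comm_groupE(5)[OF cH]
      by metis
    have "g a \<in> ev_part H" "g b \<in> od_part H" using g ab unfolding gpres_def by auto
    moreover have "\<one>\<^bsub>H\<^esub> \<in> ev_part H" using subgroup.one_closed[OF gg_ev[OF H]] by simp
    ultimately have "g a = \<one>\<^bsub>H\<^esub>" using gg_unique[OF H _ _ _ y e] by blast
    then have "a = \<one>\<^bsub>G\<^esub>" using fl[OF ac] f1 by simp
    then show ?thesis using ab bc comm_groupE(5)[OF cG] by metis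
  qed
  show ?thesis unfolding gpres_def f_def[symmetric] using fh ev od by blast
qed

lemma comm_inv:
  assumes bj: "bij_betw gj Cj Dj" and bk: "bij_betw gk Ck Dk"
    and c: "\<forall>y\<in>Ck. gj (aN y) = aM (gk y)" and cl: "\<forall>y\<in>Ck. aN y \<in> Cj"
  shows "\<forall>x\<in>Dk. inv_into Cj gj (aM x) = aN (inv_into Ck gk x)"
proof
  fix x assume x: "x \<in> Dk"
  have fx: "inv_into Ck gk x \<in> Ck" "gk (inv_into Ck gk x) = x"
    using x bk by (auto simp: bij_betw_def intro: inv_into_into f_inv_into_f)
  have "aM x = gj (aN (inv_into Ck gk x))" using c fx by metis
  then show "inv_into Cj gj (aM x) = aN (inv_into Ck gk x)"
    using bj cl fx(1) by (simp add: bij_betw_def inv_into_f_f)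
qed

lemma kiso_inv:
  fixes M :: "('a, 'b, 'c) kmod" and N :: "('d, 'e, 'f) kmod"
  assumes gM: "graded_group (M0 M)" "graded_group (M1 M)" "graded_group (M2 M)"
    and gN: "graded_group (M0 N)" "graded_group (M1 N)" "graded_group (M2 N)"
    and km: "kmorph N M g0 g1 g2"
    and b0: "bij_betw g0 (carrier (M0 N)) (carrier (M0 M))"
    and b1: "bij_betw g1 (carrier (M1 N)) (carrier (M1 M))"
    and b2: "bij_betw g2 (carrier (M2 N)) (carrier (M2 M))"
    and cl: "\<forall>y\<in>carrier (M1 N). a01 N y \<in> carrier (M0 N)" "\<forall>y\<in>carrier (M0 N). a10 N y \<in> carrier (M1 N)"
      "\<forall>y\<in>carrier (M2 N). a12 N y \<in> carrier (M1 N)" "\<forall>y\<in>carrier (M1 N). a21 N y \<in> carrier (M2 N)"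
      "\<forall>y\<in>carrier (M2 N). a02 N y \<in> carrier (M0 N)" "\<forall>y\<in>carrier (M0 N). a20 N y \<in> carrier (M2 N)"
  shows "kiso M N"
proof -
  define f0 where "f0 = inv_into (carrier (M0 N)) g0"
  define f1 where "f1 = inv_into (carrier (M1 N)) g1"
  define f2 where "f2 = inv_into (carrier (M2 N)) g2"
  have kmN: "gpres (M0 N) (M0 M) g0" "gpres (M1 N) (M1 M) g1" "gpres (M2 N) (M2 M) g2"
    "\<forall>x\<in>carrier (M1 N). g0 (a01 N x) = a01 M (g1 x)"
    "\<forall>x\<in>carrier (M0 N). g1 (a10 N x) = a10 M (g0 x)"
    "\<forall>x\<in>carrier (M2 N). g1 (a12 N x) = a12 M (g2 x)"
    "\<forall>x\<in>carrier (M1 N). g2 (a21 N x) = a21 M (g1 x)"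
    "\<forall>x\<in>carrier (M2 N). g0 (a02 N x) = a02 M (g2 x)"
    "\<forall>x\<in>carrier (M0 N). g2 (a20 N x) = a20 M (g0 x)"
    using km unfolding kmorph_def by blast+
  have "kmorph M N f0 f1 f2"
    unfolding kmorph_def f0_def f1_def f2_def
    using inv_gpres[OF gN(1) gM(1) kmN(1) b0] inv_gpres[OF gN(2) gM(2) kmN(2) b1]
      inv_gpres[OF gN(3) gM(3) kmN(3) b2]
      comm_inv[OF b0 b1 kmN(4) cl(1)] comm_inv[OF b1 b0 kmN(5) cl(2)]
      comm_inv[OF b1 b2 kmN(6) cl(3)] comm_inv[OF b2 b1 kmN(7) cl(4)]
      comm_inv[OF b0 b2 kmN(8) cl(5)] comm_inv[OF b2 b0 kmN(9) cl(6)]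
    by blast
  moreover have "\<forall>x\<in>carrier (M0 N). f0 (g0 x) = x" "\<forall>y\<in>carrier (M0 M). g0 (f0 y) = y"
    "\<forall>x\<in>carrier (M1 N). f1 (g1 x) = x" "\<forall>y\<in>carrier (M1 M). g1 (f1 y) = y"
    "\<forall>x\<in>carrier (M2 N). f2 (g2 x) = x" "\<forall>y\<in>carrier (M2 M). g2 (f2 y) = y"
    unfolding f0_def f1_def f2_def using b0 b1 b2
    by (auto simp: bij_betw_def inv_into_f_f f_inv_into_f)
  ultimately show ?thesis unfolding kiso_def using km by blast
qed

lemma normop_comm:
  fixes G H
  assumes cG: "comm_group G" and cH: "comm_group H" and h: "h \<in> hom G H"
    and f: "f \<in> hom G G" and f': "f' \<in> hom H H"
    and c: "\<And>x. x \<in> carrier G \<Longrightarrow> h (f x) = f' (h x)" and x: "x \<in> carrier G"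
  shows "h (normop p G (one_minus G f) x) = normop p H (one_minus H f') (h x)"
proof -
  interpret eG: endo G f using cG f by (simp add: endo_def endo_axioms_def)
  interpret eH: endo H f' using cH f' by (simp add: endo_def endo_axioms_def)
  have gG: "group G" and gH: "group H" using cG cH comm_group.axioms(2) by auto
  note hf = hom_facts[OF gG gH h]
  have it: "h ((one_minus G f ^^ i) x) = (one_minus H f' ^^ i) (h x)" for i
  proof (induction i)
    case 0 then show ?case by simp
  next
    case (Suc i)
    have c1: "(one_minus G f ^^ i) x \<in> carrier G" using x by simp
    show ?case using Suc c1 by (simp add: one_minus_def hf c)
  qed
  have "h (finprod G (\<lambda>i. (one_minus G f ^^ i) x) {..<n}) = finprod H (\<lambda>i. (one_minus H f' ^^ i) (h x)) {..<n}" for n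
  proof (induction n)
    case 0 then show ?case using hf(3) by simp
  next
    case (Suc n)
    have a: "finprod G (\<lambda>i. (one_minus G f ^^ i) x) {..<Suc n} = (one_minus G f ^^ n) x \<otimes>\<^bsub>G\<^esub> finprod G (\<lambda>i. (one_minus G f ^^ i) x) {..<n}"
      by (rule eG.finprod_lessThan_Suc) (use x in simp)
    have b: "finprod H (\<lambda>i. (one_minus H f' ^^ i) (h x)) {..<Suc n} = (one_minus H f' ^^ n) (h x) \<otimes>\<^bsub>H\<^esub> finprod H (\<lambda>i. (one_minus H f' ^^ i) (h x)) {..<n}"
      by (rule eH.finprod_lessThan_Suc) (use x hf in simp)
    show ?case unfolding a b using Suc it x by (simp add: hf)
  qed
  then show ?thesis unfolding normop_def .
qed

lemma one_minus_hom:
  fixes G (structure)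
  assumes "comm_group G" "f \<in> hom G G"
  shows "one_minus G f \<in> hom G G"
proof -
  interpret endo G f using assms by (simp add: endo_def endo_axioms_def)
  show ?thesis
    by (rule homI) (auto simp: one_minus_def f_mult inv_mult m_ac)
qed

locale kctx =
  fixes p :: nat and M :: "('a, 'b, 'c) kmod"
  assumes prime: "prime p" and km: "kmodule p M" and ex: "exact_kmodule M"
    and u0: "upd p (M0 M)" and u1: "upd p (M1 M)" and u2: "upd p (M2 M)"
begin

lemma gg0: "graded_group (M0 M)" and gg1: "graded_group (M1 M)" and gg2: "graded_group (M2 M)"
  using km unfolding kmodule_def by auto

lemma gr: "gpres (M1 M) (M0 M) (a01 M)" "gpres (M0 M) (M1 M) (a10 M)"
     "grev (M2 M) (M1 M) (a12 M)" "grev (M1 M) (M2 M) (a21 M)"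
     "gpres (M2 M) (M0 M) (a02 M)" "gpres (M0 M) (M2 M) (a20 M)"
  using km unfolding kmodule_def by auto

sublocale hexa p "M0 M" "M1 M" "M2 M" "a01 M" "a10 M" "a12 M" "a21 M" "a02 M" "a20 M"
  unfolding hexa_def using prime km ex gg_cg[OF gg0] gg_cg[OF gg1] gg_cg[OF gg2]
    gpres_hom[OF gr(1)] gpres_hom[OF gr(2)] grev_hom[OF gr(3)] grev_hom[OF gr(4)] gpres_hom[OF gr(5)] gpres_hom[OF gr(6)]
  unfolding kmodule_def exact_kmodule_def by blast

sublocale U0: updg "M0 M" p using g0.comm_group_axioms u0 by (simp add: updg_def updg_axioms_def)
sublocale U1: updg "M1 M" p using g1.comm_group_axioms u1 by (simp add: updg_def updg_axioms_def)
sublocale U2: updg "M2 M" p using g2.comm_group_axioms u2 by (simp add: updg_def updg_axioms_def)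

end

context kctx begin

definition X0 where "X0 = {x \<in> carrier (M0 M). a20 M x = \<one>\<^bsub>M2 M\<^esub>}"
definition Y0 where "Y0 = {x \<in> carrier (M0 M). a10 M x = \<one>\<^bsub>M1 M\<^esub>}"
definition Z1 where "Z1 = {x \<in> carrier (M1 M). a01 M x = \<one>\<^bsub>M0 M\<^esub>}"

lemma X0_sub: "subgroup X0 (M0 M)" unfolding X0_def by (rule ker_subgroup[OF g0.is_group g2.is_group h20])
lemma Y0_sub: "subgroup Y0 (M0 M)" unfolding Y0_def by (rule ker_subgroup[OF g0.is_group g1.is_group h10])
lemma Z1_sub: "subgroup Z1 (M1 M)" unfolding Z1_def by (rule ker_subgroup[OF g1.is_group g0.is_group h01])

lemma X0_cc: "compclosed (M0 M) X0" unfolding X0_def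
  by (rule ker_compclosed[OF gg0 gg2 h20]) (use gr(6) in \<open>simp add: gpres_def\<close>)
lemma Y0_cc: "compclosed (M0 M) Y0" unfolding Y0_def
  by (rule ker_compclosed[OF gg0 gg1 h10]) (use gr(2) in \<open>simp add: gpres_def\<close>)
lemma Z1_cc: "compclosed (M1 M) Z1" unfolding Z1_def
  by (rule ker_compclosed[OF gg1 gg0 h01]) (use gr(1) in \<open>simp add: gpres_def\<close>)

lemma X0_c: "x \<in> X0 \<Longrightarrow> x \<in> carrier (M0 M)" and X0_k: "x \<in> X0 \<Longrightarrow> a20 M x = \<one>\<^bsub>M2 M\<^esub>"
  unfolding X0_def by auto
lemma Y0_c: "x \<in> Y0 \<Longrightarrow> x \<in> carrier (M0 M)" and Y0_k: "x \<in> Y0 \<Longrightarrow> a10 M x = \<one>\<^bsub>M1 M\<^esub>"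
  unfolding Y0_def by auto
lemma Z1_c: "x \<in> Z1 \<Longrightarrow> x \<in> carrier (M1 M)" and Z1_k: "x \<in> Z1 \<Longrightarrow> a01 M x = \<one>\<^bsub>M0 M\<^esub>"
  unfolding Z1_def by auto

lemma X0_pdiv: assumes x: "x \<in> X0" shows "pdiv p (M0 M) x \<in> X0"
proof -
  have xc: "x \<in> carrier (M0 M)" using X0_c[OF x] .
  have "a20 M (pdiv p (M0 M) x) [^]\<^bsub>M2 M\<^esub> p = \<one>\<^bsub>M2 M\<^esub>"
    using xc X0_k[OF x] by (simp flip: f20s(5))
  then have "a20 M (pdiv p (M0 M) x) = \<one>\<^bsub>M2 M\<^esub>" by (rule U2.inj_p[rotated]) (use xc in simp)
  then show ?thesis using xc unfolding X0_def by simp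
qed

lemma Y0_pdiv: assumes x: "x \<in> Y0" shows "pdiv p (M0 M) x \<in> Y0"
proof -
  have xc: "x \<in> carrier (M0 M)" using Y0_c[OF x] .
  have "a10 M (pdiv p (M0 M) x) [^]\<^bsub>M1 M\<^esub> p = \<one>\<^bsub>M1 M\<^esub>"
    using xc Y0_k[OF x] by (simp flip: f10s(5))
  then have "a10 M (pdiv p (M0 M) x) = \<one>\<^bsub>M1 M\<^esub>" by (rule U1.inj_p[rotated]) (use xc in simp)
  then show ?thesis using xc unfolding Y0_def by simp
qed

lemma Z1_pdiv: assumes x: "x \<in> Z1" shows "pdiv p (M1 M) x \<in> Z1"
proof -
  have xc: "x \<in> carrier (M1 M)" using Z1_c[OF x] .
  have "a01 M (pdiv p (M1 M) x) [^]\<^bsub>M0 M\<^esub> p = \<one>\<^bsub>M0 M\<^esub>"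
    using xc Z1_k[OF x] by (simp flip: f01s(5))
  then have "a01 M (pdiv p (M1 M) x) = \<one>\<^bsub>M0 M\<^esub>" by (rule U0.inj_p[rotated]) (use xc in simp)
  then show ?thesis using xc unfolding Z1_def by simp
qed

definition piX where "piX m = pdiv p (M0 M) (a01 M (a10 M m))"
definition piY where "piY m = m \<otimes>\<^bsub>M0 M\<^esub> inv\<^bsub>M0 M\<^esub> (piX m)"

lemma NU_fix: "x \<in> carrier (M0 M) \<Longrightarrow> a20 M x = \<one>\<^bsub>M2 M\<^esub> \<Longrightarrow> a01 M (a10 M x) = x [^]\<^bsub>M0 M\<^esub> p"
  using n0 eU.N_fix[of x p] by simp

lemma NV_fix: "x \<in> carrier (M1 M) \<Longrightarrow> a21 M x = \<one>\<^bsub>M2 M\<^esub> \<Longrightarrow> a10 M (a01 M x) = x [^]\<^bsub>M1 M\<^esub> p"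
  using n1 eV.N_fix[of x p] by simp

lemma piX_c: "m \<in> carrier (M0 M) \<Longrightarrow> piX m \<in> carrier (M0 M)"
  unfolding piX_def by simp

lemma piX_X0: "m \<in> carrier (M0 M) \<Longrightarrow> piX m \<in> X0"
  unfolding piX_def by (rule X0_pdiv) (simp add: X0_def)

lemma piX_mult: "m \<in> carrier (M0 M) \<Longrightarrow> n \<in> carrier (M0 M) \<Longrightarrow> piX (m \<otimes>\<^bsub>M0 M\<^esub> n) = piX m \<otimes>\<^bsub>M0 M\<^esub> piX n"
  unfolding piX_def by (simp add: U0.pdiv_mult)

lemma piX_X: "x \<in> X0 \<Longrightarrow> piX x = x"
  unfolding piX_def using NU_fix X0_c X0_k by simp

lemma piX_Y: "y \<in> Y0 \<Longrightarrow> piX y = \<one>\<^bsub>M0 M\<^esub>"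
  unfolding piX_def using Y0_k by simp

lemma a10_piX: assumes m: "m \<in> carrier (M0 M)" shows "a10 M (piX m) = a10 M m"
proof -
  have "a10 M (piX m) [^]\<^bsub>M1 M\<^esub> p = a10 M (a01 M (a10 M m))"
    using m unfolding piX_def by (simp flip: f10s(5))
  also have "\<dots> = a10 M m [^]\<^bsub>M1 M\<^esub> p" using m by (intro NV_fix) simp_all
  finally have e: "a10 M (piX m) [^]\<^bsub>M1 M\<^esub> p = a10 M m [^]\<^bsub>M1 M\<^esub> p" .
  show ?thesis by (rule U1.pow_inj[OF _ _ e]) (use m piX_c in simp_all)
qed

lemma piY_c: "m \<in> carrier (M0 M) \<Longrightarrow> piY m \<in> carrier (M0 M)"
  unfolding piY_def using piX_c by simp

lemma piY_Y0: assumes m: "m \<in> carrier (M0 M)" shows "piY m \<in> Y0"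
  unfolding piY_def Y0_def using m piX_c[OF m] a10_piX[OF m] by simp

lemma decomp0: "m \<in> carrier (M0 M) \<Longrightarrow> piX m \<otimes>\<^bsub>M0 M\<^esub> piY m = m"
  unfolding piY_def using piX_c by (simp add: g0.m_lcomm)

lemma XY_int: "x \<in> X0 \<Longrightarrow> x \<in> Y0 \<Longrightarrow> x = \<one>\<^bsub>M0 M\<^esub>"
  using piX_X piX_Y by force

end

lemma (in comm_group) cancel_l: "x \<in> carrier G \<Longrightarrow> y \<in> carrier G \<Longrightarrow> x \<otimes> y \<otimes> inv x = y"
  by (metis inv_closed m_assoc m_comm r_inv r_one)

context kctx begin

definition piZ where "piZ m = m \<otimes>\<^bsub>M1 M\<^esub> inv\<^bsub>M1 M\<^esub> (a10 M (pdiv p (M0 M) (a01 M m)))"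

lemma a01_X0: "m \<in> carrier (M1 M) \<Longrightarrow> a01 M m \<in> X0"
  unfolding X0_def by simp

lemma NU_pdiv: "x \<in> X0 \<Longrightarrow> a01 M (a10 M (pdiv p (M0 M) x)) = x"
  using NU_fix[of "pdiv p (M0 M) x"] X0_pdiv[of x] X0_c X0_k by simp

lemma piZ_c: "m \<in> carrier (M1 M) \<Longrightarrow> piZ m \<in> carrier (M1 M)"
  unfolding piZ_def by simp

lemma piZ_Z1: assumes m: "m \<in> carrier (M1 M)" shows "piZ m \<in> Z1"
  unfolding piZ_def Z1_def using m NU_pdiv[OF a01_X0[OF m]] by simp

definition gE0 where "gE0 = (\<lambda>(x, y). x \<otimes>\<^bsub>M0 M\<^esub> y)"
definition gE1 where "gE1 = (\<lambda>(x, z). a10 M (pdiv p (M0 M) x) \<otimes>\<^bsub>M1 M\<^esub> z)"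
definition gE2 where "gE2 = (\<lambda>(y, z). a20 M y \<otimes>\<^bsub>M2 M\<^esub> a21 M z)"

lemma bij0: "bij_betw gE0 (X0 \<times> Y0) (carrier (M0 M))"
proof (rule bij_betw_byWitness[where f'="\<lambda>m. (piX m, piY m)"])
  show "\<forall>a\<in>X0 \<times> Y0. (piX (gE0 a), piY (gE0 a)) = a"
  proof
    fix a assume a: "a \<in> X0 \<times> Y0"
    then obtain x y where xy: "a = (x, y)" "x \<in> X0" "y \<in> Y0" by blast
    have xc: "x \<in> carrier (M0 M)" and yc: "y \<in> carrier (M0 M)" using xy X0_c Y0_c by auto
    have px: "piX (x \<otimes>\<^bsub>M0 M\<^esub> y) = x" using piX_mult[OF xc yc] piX_X[OF xy(2)] piX_Y[OF xy(3)] xc by simp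
    have "piY (x \<otimes>\<^bsub>M0 M\<^esub> y) = y" unfolding piY_def px using g0.cancel_l[OF xc yc] .
    then show "(piX (gE0 a), piY (gE0 a)) = a" using px xy by (simp add: gE0_def)
  qed
  show "\<forall>a'\<in>carrier (M0 M). gE0 (piX a', piY a') = a'"
    using decomp0 by (simp add: gE0_def)
  show "gE0 ` (X0 \<times> Y0) \<subseteq> carrier (M0 M)" using X0_c Y0_c by (auto simp: gE0_def)
  show "(\<lambda>m. (piX m, piY m)) ` carrier (M0 M) \<subseteq> X0 \<times> Y0" using piX_X0 piY_Y0 by auto
qed

lemma bij1: "bij_betw gE1 (X0 \<times> Z1) (carrier (M1 M))"
proof (rule bij_betw_byWitness[where f'="\<lambda>m. (a01 M m, piZ m)"])
  show "\<forall>a\<in>X0 \<times> Z1. (a01 M (gE1 a), piZ (gE1 a)) = a"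
  proof
    fix a assume a: "a \<in> X0 \<times> Z1"
    then obtain x z where xz: "a = (x, z)" "x \<in> X0" "z \<in> Z1" by blast
    have xc: "x \<in> carrier (M0 M)" and zc: "z \<in> carrier (M1 M)" using xz X0_c Z1_c by auto
    have ax: "a01 M (a10 M (pdiv p (M0 M) x) \<otimes>\<^bsub>M1 M\<^esub> z) = x"
      using NU_pdiv[OF xz(2)] Z1_k[OF xz(3)] xc zc by simp
    have "piZ (a10 M (pdiv p (M0 M) x) \<otimes>\<^bsub>M1 M\<^esub> z) = z"
      unfolding piZ_def ax using g1.cancel_l xc zc by simp
    then show "(a01 M (gE1 a), piZ (gE1 a)) = a" using ax xz by (simp add: gE1_def)
  qed
  show "\<forall>a'\<in>carrier (M1 M). gE1 (a01 M a', piZ a') = a'"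
    by (simp add: gE1_def piZ_def g1.m_lcomm)
  show "gE1 ` (X0 \<times> Z1) \<subseteq> carrier (M1 M)" using X0_c Z1_c by (auto simp: gE1_def)
  show "(\<lambda>m. (a01 M m, piZ m)) ` carrier (M1 M) \<subseteq> X0 \<times> Z1" using a01_X0 piZ_Z1 by auto
qed

lemma ker2:
  assumes y: "y \<in> Y0" and z: "z \<in> Z1" and e: "a20 M y \<otimes>\<^bsub>M2 M\<^esub> a21 M z = \<one>\<^bsub>M2 M\<^esub>"
  shows "y = \<one>\<^bsub>M0 M\<^esub> \<and> z = \<one>\<^bsub>M1 M\<^esub>"
proof -
  have yc: "y \<in> carrier (M0 M)" and zc: "z \<in> carrier (M1 M)" using y z Y0_c Z1_c by auto
  have "a12 M (a20 M y \<otimes>\<^bsub>M2 M\<^esub> a21 M z) = \<one>\<^bsub>M1 M\<^esub>" using e by simp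
  then have v: "a12 M (a21 M z) = \<one>\<^bsub>M1 M\<^esub>" using yc zc by simp
  define w where "w = a21 M z"
  have wc: "w \<in> carrier (M2 M)" unfolding w_def using zc by simp
  have NA: "normop p (M2 M) (one_minus (M2 M) (a20 M \<circ> a02 M)) w = w [^]\<^bsub>M2 M\<^esub> p"
    using zc unfolding w_def by (intro eA.N_fix) simp_all
  have NB: "normop p (M2 M) (one_minus (M2 M) (a21 M \<circ> a12 M)) w = w [^]\<^bsub>M2 M\<^esub> p"
    using zc v unfolding w_def by (intro eB.N_fix) simp_all
  have "w [^]\<^bsub>M2 M\<^esub> p \<otimes>\<^bsub>M2 M\<^esub> w [^]\<^bsub>M2 M\<^esub> p = w [^]\<^bsub>M2 M\<^esub> p"
    using n2 wc NA NB by metis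
  then have "w [^]\<^bsub>M2 M\<^esub> p = \<one>\<^bsub>M2 M\<^esub>" using wc by simp
  then have w1: "w = \<one>\<^bsub>M2 M\<^esub>" by (rule U2.inj_p[rotated]) (rule wc)
  then obtain x where x: "x \<in> carrier (M0 M)" "z = a10 M x" using x1[OF zc] unfolding w_def by blast
  have "a01 M (a10 M (piX x)) = piX x [^]\<^bsub>M0 M\<^esub> p"
    using NU_fix piX_c[OF x(1)] X0_k[OF piX_X0[OF x(1)]] by simp
  moreover have "a01 M (a10 M (piX x)) = \<one>\<^bsub>M0 M\<^esub>" using a10_piX[OF x(1)] Z1_k[OF z] x(2) by simp
  ultimately have "piX x [^]\<^bsub>M0 M\<^esub> p = \<one>\<^bsub>M0 M\<^esub>" by simp
  then have "piX x = \<one>\<^bsub>M0 M\<^esub>" by (rule U0.inj_p[rotated]) (rule piX_c[OF x(1)])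
  then have z1: "z = \<one>\<^bsub>M1 M\<^esub>" using a10_piX[OF x(1)] x(2) by simp
  then have "a20 M y = \<one>\<^bsub>M2 M\<^esub>" using e yc by simp
  then have "y \<in> X0" using yc unfolding X0_def by simp
  then have "y = \<one>\<^bsub>M0 M\<^esub>" using XY_int y by blast
  then show ?thesis using z1 by simp
qed

lemma NB_a12: "w \<in> carrier (M2 M) \<Longrightarrow>
   a12 M (normop p (M2 M) (one_minus (M2 M) (a21 M \<circ> a12 M)) w) = \<one>\<^bsub>M1 M\<^esub>"
proof -
  assume w: "w \<in> carrier (M2 M)"
  have "a12 M (normop p (M2 M) (one_minus (M2 M) (a21 M \<circ> a12 M)) w) =
        normop p (M1 M) (one_minus (M1 M) (a12 M \<circ> a21 M)) (a12 M w)"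
    by (rule normop_comm[OF cg2 cg1 h12 homB homV _ w]) simp
  also have "\<dots> = a10 M (a01 M (a12 M w))" using bspec[OF n1 f12s(1)[OF w]] by (rule sym)
  finally show ?thesis using w by simp
qed

lemma NA_a02: "w \<in> carrier (M2 M) \<Longrightarrow>
   a02 M (normop p (M2 M) (one_minus (M2 M) (a20 M \<circ> a02 M)) w) = \<one>\<^bsub>M0 M\<^esub>"
proof -
  assume w: "w \<in> carrier (M2 M)"
  have "a02 M (normop p (M2 M) (one_minus (M2 M) (a20 M \<circ> a02 M)) w) =
        normop p (M0 M) (one_minus (M0 M) (a02 M \<circ> a20 M)) (a02 M w)"
    by (rule normop_comm[OF cg2 cg0 h02 homA homU _ w]) simp
  also have "\<dots> = a01 M (a10 M (a02 M w))" using bspec[OF n0 f02s(1)[OF w]] by (rule sym)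
  finally show ?thesis using w by simp
qed

lemma bij2: "bij_betw gE2 (Y0 \<times> Z1) (carrier (M2 M))"
  unfolding bij_betw_def
proof
  show "inj_on gE2 (Y0 \<times> Z1)"
  proof (rule inj_onI)
    fix a b assume a: "a \<in> Y0 \<times> Z1" and b: "b \<in> Y0 \<times> Z1" and e: "gE2 a = gE2 b"
    obtain y z where yz: "a = (y, z)" "y \<in> Y0" "z \<in> Z1" using a by blast
    obtain y' z' where yz': "b = (y', z')" "y' \<in> Y0" "z' \<in> Z1" using b by blast
    have c: "y \<in> carrier (M0 M)" "z \<in> carrier (M1 M)" "y' \<in> carrier (M0 M)" "z' \<in> carrier (M1 M)"
      using yz yz' Y0_c Z1_c by auto
    define yy where "yy = y \<otimes>\<^bsub>M0 M\<^esub> inv\<^bsub>M0 M\<^esub> y'"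
    define zz where "zz = z \<otimes>\<^bsub>M1 M\<^esub> inv\<^bsub>M1 M\<^esub> z'"
    have yy: "yy \<in> Y0" unfolding yy_def using yz(2) yz'(2) Y0_sub by (simp add: subgroup.m_closed subgroup.m_inv_closed)
    have zz: "zz \<in> Z1" unfolding zz_def using yz(3) yz'(3) Z1_sub by (simp add: subgroup.m_closed subgroup.m_inv_closed)
    have e2: "a20 M y \<otimes>\<^bsub>M2 M\<^esub> a21 M z = a20 M y' \<otimes>\<^bsub>M2 M\<^esub> a21 M z'"
      using e yz yz' by (simp add: gE2_def)
    have "a20 M yy \<otimes>\<^bsub>M2 M\<^esub> a21 M zz =
      (a20 M y \<otimes>\<^bsub>M2 M\<^esub> a21 M z) \<otimes>\<^bsub>M2 M\<^esub> inv\<^bsub>M2 M\<^esub> (a20 M y' \<otimes>\<^bsub>M2 M\<^esub> a21 M z')"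
      unfolding yy_def zz_def using c by (simp add: g2.inv_mult g2.m_ac)
    also have "\<dots> = \<one>\<^bsub>M2 M\<^esub>" unfolding e2 using c by simp
    finally have "yy = \<one>\<^bsub>M0 M\<^esub> \<and> zz = \<one>\<^bsub>M1 M\<^esub>" using ker2[OF yy zz] by blast
    then have "y = y'" "z = z'" unfolding yy_def zz_def using c
      by (simp_all add: g0.div_one_eq g1.div_one_eq)
    then show "a = b" using yz yz' by simp
  qed
next
  show "gE2 ` (Y0 \<times> Z1) = carrier (M2 M)"
  proof
    show "gE2 ` (Y0 \<times> Z1) \<subseteq> carrier (M2 M)" using Y0_c Z1_c by (auto simp: gE2_def)
  next
    show "carrier (M2 M) \<subseteq> gE2 ` (Y0 \<times> Z1)"
    proof
      fix w assume w: "w \<in> carrier (M2 M)"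
      define NA where "NA = normop p (M2 M) (one_minus (M2 M) (a20 M \<circ> a02 M)) w"
      define NB where "NB = normop p (M2 M) (one_minus (M2 M) (a21 M \<circ> a12 M)) w"
      have NAc: "NA \<in> carrier (M2 M)" and NBc: "NB \<in> carrier (M2 M)" unfolding NA_def NB_def using w by simp_all
      have n: "NA \<otimes>\<^bsub>M2 M\<^esub> NB = w [^]\<^bsub>M2 M\<^esub> p" unfolding NA_def NB_def using n2 w by blast
      define w2 where "w2 = pdiv p (M2 M) NB"
      define w3 where "w3 = pdiv p (M2 M) NA"
      have w2c: "w2 \<in> carrier (M2 M)" and w3c: "w3 \<in> carrier (M2 M)" unfolding w2_def w3_def using NAc NBc by simp_all
      have ww: "w3 \<otimes>\<^bsub>M2 M\<^esub> w2 = w"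
        unfolding w2_def w3_def using U2.pdiv_mult[OF NAc NBc] n w by simp
      have "a12 M w2 [^]\<^bsub>M1 M\<^esub> p = \<one>\<^bsub>M1 M\<^esub>"
        unfolding w2_def using NBc NB_a12[OF w] by (simp add: NB_def flip: f12s(5))
      then have "a12 M w2 = \<one>\<^bsub>M1 M\<^esub>" by (rule U1.inj_p[rotated]) (use w2c in simp)
      then obtain m where m: "m \<in> carrier (M0 M)" "w2 = a20 M m" using x4[OF w2c] by blast
      have "a02 M w3 [^]\<^bsub>M0 M\<^esub> p = \<one>\<^bsub>M0 M\<^esub>"
        unfolding w3_def using NAc NA_a02[OF w] by (simp add: NA_def flip: f02s(5))
      then have "a02 M w3 = \<one>\<^bsub>M0 M\<^esub>" by (rule U0.inj_p[rotated]) (use w3c in simp)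
      then obtain n where n: "n \<in> carrier (M1 M)" "w3 = a21 M n" using x2[OF w3c] by blast
      have "a20 M (piY m) = a20 M m" unfolding piY_def using m piX_c X0_k[OF piX_X0[OF m(1)]] by simp
      moreover have "a21 M (piZ n) = a21 M n" unfolding piZ_def using n by simp
      ultimately have "gE2 (piY m, piZ n) = w"
        using ww m n w2c w3c by (simp add: gE2_def g2.m_comm)
      moreover have "(piY m, piZ n) \<in> Y0 \<times> Z1" using piY_Y0[OF m(1)] piZ_Z1[OF n(1)] by simp
      ultimately show "w \<in> gE2 ` (Y0 \<times> Z1)" by (metis image_eqI)
    qed
  qed
qed

end

lemma (in comm_group) inv_div: "x \<in> carrier G \<Longrightarrow> v \<in> carrier G \<Longrightarrow> x \<otimes> inv (x \<otimes> inv v) = v"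
  by (simp add: inv_mult m_ac)

lemma upd_subgm:
  assumes G: "comm_group G" and S: "subgroup S G" and u: "upd p G"
    and pd: "\<And>x. x \<in> S \<Longrightarrow> pdiv p G x \<in> S"
  shows "upd p (subgm G S)"
proof -
  interpret updg G p using G u by (simp add: updg_def updg_axioms_def)
  have sc: "\<And>x. x \<in> S \<Longrightarrow> x \<in> carrier G" using subgroup.mem_carrier[OF S] .
  have "inj_on (\<lambda>x. x [^]\<^bsub>G\<^esub> p) S" using pow_inj sc by (auto intro: inj_onI)
  moreover have "(\<lambda>x. x [^]\<^bsub>G\<^esub> p) ` S = S"
  proof
    show "(\<lambda>x. x [^]\<^bsub>G\<^esub> p) ` S \<subseteq> S" using subgroup_pow_closed[OF S] by auto
    show "S \<subseteq> (\<lambda>x. x [^]\<^bsub>G\<^esub> p) ` S"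
    proof
      fix y assume y: "y \<in> S"
      have "y = pdiv p G y [^]\<^bsub>G\<^esub> p" using sc[OF y] by simp
      then show "y \<in> (\<lambda>x. x [^]\<^bsub>G\<^esub> p) ` S" using pd[OF y] by blast
    qed
  qed
  ultimately show ?thesis unfolding upd_def bij_betw_def by simp
qed

context kctx begin

definition Xg where "Xg = subgm (M0 M) X0"
definition Yg where "Yg = subgm (M0 M) Y0"
definition Zg where "Zg = subgm (M1 M) Z1"
definition thY where "thY = one_minus (M0 M) (a02 M \<circ> a20 M)"
definition thZ where "thZ = one_minus (M1 M) (a12 M \<circ> a21 M)"

lemma Xg_gg: "graded_group Xg" unfolding Xg_def by (rule subgm_gg[OF gg0 X0_sub X0_cc])
lemma Yg_gg: "graded_group Yg" unfolding Yg_def by (rule subgm_gg[OF gg0 Y0_sub Y0_cc])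
lemma Zg_gg: "graded_group Zg" unfolding Zg_def by (rule subgm_gg[OF gg1 Z1_sub Z1_cc])

lemma Xg_upd: "upd p Xg" unfolding Xg_def by (rule upd_subgm[OF cg0 X0_sub u0 X0_pdiv])
lemma Yg_upd: "upd p Yg" unfolding Yg_def by (rule upd_subgm[OF cg0 Y0_sub u0 Y0_pdiv])
lemma Zg_upd: "upd p Zg" unfolding Zg_def by (rule upd_subgm[OF cg1 Z1_sub u1 Z1_pdiv])

lemma thY_Y0: "y \<in> Y0 \<Longrightarrow> thY y \<in> Y0"
  unfolding thY_def one_minus_def Y0_def by simp
lemma thZ_Z1: "z \<in> Z1 \<Longrightarrow> thZ z \<in> Z1"
  unfolding thZ_def one_minus_def Z1_def by simp

lemma thY_iter: "y \<in> Y0 \<Longrightarrow> (thY ^^ i) y \<in> Y0"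
  by (induction i) (auto simp: thY_Y0)
lemma thZ_iter: "z \<in> Z1 \<Longrightarrow> (thZ ^^ i) z \<in> Z1"
  by (induction i) (auto simp: thZ_Z1)

lemma thY_ev: assumes y: "y \<in> ev_part (M0 M)" shows "thY y \<in> ev_part (M0 M)"
proof -
  have "a02 M (a20 M y) \<in> ev_part (M0 M)" using gr(5,6) y unfolding gpres_def by blast
  then show ?thesis unfolding thY_def one_minus_def
    using y gg_ev[OF gg0] by (simp add: subgroup.m_closed subgroup.m_inv_closed)
qed
lemma thY_od: assumes y: "y \<in> od_part (M0 M)" shows "thY y \<in> od_part (M0 M)"
proof -
  have "a02 M (a20 M y) \<in> od_part (M0 M)" using gr(5,6) y unfolding gpres_def by blast
  then show ?thesis unfolding thY_def one_minus_def
    using y gg_od[OF gg0] by (simp add: subgroup.m_closed subgroup.m_inv_closed)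
qed
lemma thZ_ev: assumes y: "y \<in> ev_part (M1 M)" shows "thZ y \<in> ev_part (M1 M)"
proof -
  have "a12 M (a21 M y) \<in> ev_part (M1 M)" using gr(3,4) y unfolding grev_def by blast
  then show ?thesis unfolding thZ_def one_minus_def
    using y gg_ev[OF gg1] by (simp add: subgroup.m_closed subgroup.m_inv_closed)
qed
lemma thZ_od: assumes y: "y \<in> od_part (M1 M)" shows "thZ y \<in> od_part (M1 M)"
proof -
  have "a12 M (a21 M y) \<in> od_part (M1 M)" using gr(3,4) y unfolding grev_def by blast
  then show ?thesis unfolding thZ_def one_minus_def
    using y gg_od[OF gg1] by (simp add: subgroup.m_closed subgroup.m_inv_closed)
qed

lemma thY_hom: "thY \<in> hom (M0 M) (M0 M)" unfolding thY_def by (rule one_minus_hom[OF cg0 homU])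
lemma thZ_hom: "thZ \<in> hom (M1 M) (M1 M)" unfolding thZ_def by (rule one_minus_hom[OF cg1 homV])

lemma zthY: "zth_module p Yg thY"
  unfolding zth_module_def
proof (intro conjI)
  show "graded_group Yg" by (rule Yg_gg)
  show "upd p Yg" by (rule Yg_upd)
  show "gpres Yg Yg thY"
    unfolding gpres_def
  proof (intro conjI)
    show "thY \<in> hom Yg Yg"
      unfolding Yg_def using thY_Y0 hom_mult[OF thY_hom] Y0_c by (intro homI) auto
    show "thY ` ev_part Yg \<subseteq> ev_part Yg" unfolding Yg_def using thY_Y0 thY_ev by auto
    show "thY ` od_part Yg \<subseteq> od_part Yg" unfolding Yg_def using thY_Y0 thY_od by auto
  qed
  show "\<forall>y\<in>carrier Yg. normop p Yg thY y = \<one>\<^bsub>Yg\<^esub>"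
  proof
    fix y assume "y \<in> carrier Yg"
    then have y: "y \<in> Y0" unfolding Yg_def by simp
    have "normop p Yg thY y = normop p (M0 M) thY y"
      unfolding normop_def Yg_def by (rule subgm_finprod[OF cg0 Y0_sub thY_iter[OF y]])
    also have "\<dots> = a01 M (a10 M y)" unfolding thY_def using bspec[OF n0 Y0_c[OF y]] by (rule sym)
    also have "\<dots> = \<one>\<^bsub>M0 M\<^esub>" using Y0_k[OF y] by simp
    finally show "normop p Yg thY y = \<one>\<^bsub>Yg\<^esub>" unfolding Yg_def by simp
  qed
qed

lemma zthZ: "zth_module p Zg thZ"
  unfolding zth_module_def
proof (intro conjI)
  show "graded_group Zg" by (rule Zg_gg)
  show "upd p Zg" by (rule Zg_upd)
  show "gpres Zg Zg thZ"
    unfolding gpres_def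
  proof (intro conjI)
    show "thZ \<in> hom Zg Zg"
      unfolding Zg_def using thZ_Z1 hom_mult[OF thZ_hom] Z1_c by (intro homI) auto
    show "thZ ` ev_part Zg \<subseteq> ev_part Zg" unfolding Zg_def using thZ_Z1 thZ_ev by auto
    show "thZ ` od_part Zg \<subseteq> od_part Zg" unfolding Zg_def using thZ_Z1 thZ_od by auto
  qed
  show "\<forall>y\<in>carrier Zg. normop p Zg thZ y = \<one>\<^bsub>Zg\<^esub>"
  proof
    fix y assume "y \<in> carrier Zg"
    then have y: "y \<in> Z1" unfolding Zg_def by simp
    have "normop p Zg thZ y = normop p (M1 M) thZ y"
      unfolding normop_def Zg_def by (rule subgm_finprod[OF cg1 Z1_sub thZ_iter[OF y]])
    also have "\<dots> = a10 M (a01 M y)" unfolding thZ_def using bspec[OF n1 Z1_c[OF y]] by (rule sym)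
    also have "\<dots> = \<one>\<^bsub>M1 M\<^esub>" using Z1_k[OF y] by simp
    finally show "normop p Zg thZ y = \<one>\<^bsub>Zg\<^esub>" unfolding Zg_def by simp
  qed
qed

lemma zpX: "zp_module p Xg"
  unfolding zp_module_def using Xg_gg Xg_upd by simp

lemma omY: "y \<in> Y0 \<Longrightarrow> one_minus Yg thY y = a02 M (a20 M y)"
  unfolding one_minus_def Yg_def using subgm_inv[OF cg0 Y0_sub thY_Y0] Y0_c
  by (simp add: thY_def one_minus_def g0.inv_div)

lemma omZ: "z \<in> Z1 \<Longrightarrow> one_minus Zg thZ z = a12 M (a21 M z)"
  unfolding one_minus_def Zg_def using subgm_inv[OF cg1 Z1_sub thZ_Z1] Z1_c
  by (simp add: thZ_def one_minus_def g1.inv_div)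

end

context kctx begin

definition EE where "EE = Emod p Xg Yg thY Zg thZ"

lemma EE_simps:
  "M0 EE = gsum Xg Yg" "M1 EE = gsum Xg Zg" "M2 EE = gsum Yg (gshift Zg)"
  "a01 EE = (\<lambda>(x, z). (x, \<one>\<^bsub>Yg\<^esub>))"
  "a10 EE = (\<lambda>(x, y). (x [^]\<^bsub>Xg\<^esub> p, \<one>\<^bsub>Zg\<^esub>))"
  "a12 EE = (\<lambda>(y, z). (\<one>\<^bsub>Xg\<^esub>, one_minus Zg thZ z))"
  "a21 EE = (\<lambda>(x, z). (\<one>\<^bsub>Yg\<^esub>, z))"
  "a02 EE = (\<lambda>(y, z). (\<one>\<^bsub>Xg\<^esub>, one_minus Yg thY y))"
  "a20 EE = (\<lambda>(x, y). (y, \<one>\<^bsub>Zg\<^esub>))"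
  by (simp_all add: EE_def Emod_def)

lemma EE_car: "carrier (M0 EE) = X0 \<times> Y0" "carrier (M1 EE) = X0 \<times> Z1" "carrier (M2 EE) = Y0 \<times> Z1"
  by (simp_all add: EE_simps Xg_def Yg_def Zg_def)

lemma EE_gg: "graded_group (M0 EE)" "graded_group (M1 EE)" "graded_group (M2 EE)"
  unfolding EE_simps(1-3) using gsum_gg Xg_gg Yg_gg Zg_gg gshift_gg by auto

lemma gp0: "gpres (M0 EE) (M0 M) gE0"
  unfolding gpres_def
proof (intro conjI)
  show "gE0 \<in> hom (M0 EE) (M0 M)"
  proof (rule homI)
    fix a assume "a \<in> carrier (M0 EE)" then show "gE0 a \<in> carrier (M0 M)"
      unfolding EE_car using X0_c Y0_c by (auto simp: gE0_def)
  next
    fix a b assume a: "a \<in> carrier (M0 EE)" and b: "b \<in> carrier (M0 EE)"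
    then have c: "fst a \<in> carrier (M0 M)" "snd a \<in> carrier (M0 M)" "fst b \<in> carrier (M0 M)" "snd b \<in> carrier (M0 M)"
      unfolding EE_car using X0_c Y0_c by auto
    show "gE0 (a \<otimes>\<^bsub>M0 EE\<^esub> b) = gE0 a \<otimes>\<^bsub>M0 M\<^esub> gE0 b"
      unfolding EE_simps using c by (simp add: gE0_def Xg_def Yg_def case_prod_beta g0.m_ac)
  qed
  show "gE0 ` ev_part (M0 EE) \<subseteq> ev_part (M0 M)"
    unfolding EE_simps using gg_ev[OF gg0] by (auto simp: gE0_def Xg_def Yg_def subgroup.m_closed)
  show "gE0 ` od_part (M0 EE) \<subseteq> od_part (M0 M)"
    unfolding EE_simps using gg_od[OF gg0] by (auto simp: gE0_def Xg_def Yg_def subgroup.m_closed)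
qed

lemma gp1: "gpres (M1 EE) (M1 M) gE1"
  unfolding gpres_def
proof (intro conjI)
  show "gE1 \<in> hom (M1 EE) (M1 M)"
  proof (rule homI)
    fix a assume "a \<in> carrier (M1 EE)" then show "gE1 a \<in> carrier (M1 M)"
      unfolding EE_car using X0_c Z1_c by (auto simp: gE1_def)
  next
    fix a b assume a: "a \<in> carrier (M1 EE)" and b: "b \<in> carrier (M1 EE)"
    then have c: "fst a \<in> carrier (M0 M)" "snd a \<in> carrier (M1 M)" "fst b \<in> carrier (M0 M)" "snd b \<in> carrier (M1 M)"
      unfolding EE_car using X0_c Z1_c by auto
    show "gE1 (a \<otimes>\<^bsub>M1 EE\<^esub> b) = gE1 a \<otimes>\<^bsub>M1 M\<^esub> gE1 b"
      unfolding EE_simps using c by (simp add: gE1_def Xg_def Zg_def case_prod_beta g1.m_ac U0.pdiv_mult)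
  qed
  have ev: "a10 M (pdiv p (M0 M) x) \<in> ev_part (M1 M)" if "x \<in> ev_part (M0 M)" for x
    using pdiv_ev[OF gg0 u0 that] gr(2) unfolding gpres_def by blast
  have od: "a10 M (pdiv p (M0 M) x) \<in> od_part (M1 M)" if "x \<in> od_part (M0 M)" for x
    using pdiv_od[OF gg0 u0 that] gr(2) unfolding gpres_def by blast
  show "gE1 ` ev_part (M1 EE) \<subseteq> ev_part (M1 M)"
    unfolding EE_simps using gg_ev[OF gg1] ev by (auto simp: gE1_def Xg_def Zg_def subgroup.m_closed)
  show "gE1 ` od_part (M1 EE) \<subseteq> od_part (M1 M)"
    unfolding EE_simps using gg_od[OF gg1] od by (auto simp: gE1_def Xg_def Zg_def subgroup.m_closed)
qed

lemma gp2: "gpres (M2 EE) (M2 M) gE2"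
  unfolding gpres_def
proof (intro conjI)
  show "gE2 \<in> hom (M2 EE) (M2 M)"
  proof (rule homI)
    fix a assume "a \<in> carrier (M2 EE)" then show "gE2 a \<in> carrier (M2 M)"
      unfolding EE_car using Y0_c Z1_c by (auto simp: gE2_def)
  next
    fix a b assume a: "a \<in> carrier (M2 EE)" and b: "b \<in> carrier (M2 EE)"
    then have c: "fst a \<in> carrier (M0 M)" "snd a \<in> carrier (M1 M)" "fst b \<in> carrier (M0 M)" "snd b \<in> carrier (M1 M)"
      unfolding EE_car using Y0_c Z1_c by auto
    show "gE2 (a \<otimes>\<^bsub>M2 EE\<^esub> b) = gE2 a \<otimes>\<^bsub>M2 M\<^esub> gE2 b"
      unfolding EE_simps using c by (simp add: gE2_def Yg_def Zg_def case_prod_beta g2.m_ac)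
  qed
  have e20: "a20 M y \<in> ev_part (M2 M)" if "y \<in> ev_part (M0 M)" for y
    using gr(6) that unfolding gpres_def by blast
  have o20: "a20 M y \<in> od_part (M2 M)" if "y \<in> od_part (M0 M)" for y
    using gr(6) that unfolding gpres_def by blast
  have e21: "a21 M y \<in> ev_part (M2 M)" if "y \<in> od_part (M1 M)" for y
    using gr(4) that unfolding grev_def by blast
  have o21: "a21 M y \<in> od_part (M2 M)" if "y \<in> ev_part (M1 M)" for y
    using gr(4) that unfolding grev_def by blast
  show "gE2 ` ev_part (M2 EE) \<subseteq> ev_part (M2 M)"
    unfolding EE_simps using gg_ev[OF gg2] e20 e21 by (auto simp: gE2_def Yg_def Zg_def subgroup.m_closed)
  show "gE2 ` od_part (M2 EE) \<subseteq> od_part (M2 M)"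
    unfolding EE_simps using gg_od[OF gg2] o20 o21 by (auto simp: gE2_def Yg_def Zg_def subgroup.m_closed)
qed

lemma one_simps[simp]: "\<one>\<^bsub>Xg\<^esub> = \<one>\<^bsub>M0 M\<^esub>" "\<one>\<^bsub>Yg\<^esub> = \<one>\<^bsub>M0 M\<^esub>" "\<one>\<^bsub>Zg\<^esub> = \<one>\<^bsub>M1 M\<^esub>"
  "x [^]\<^bsub>Xg\<^esub> (n::nat) = x [^]\<^bsub>M0 M\<^esub> n"
  by (simp_all add: Xg_def Yg_def Zg_def)

lemma kmE: "kmorph EE M gE0 gE1 gE2"
  unfolding kmorph_def
proof (intro conjI gp0 gp1 gp2 ballI)
  fix a assume "a \<in> carrier (M1 EE)"
  then obtain x z where a: "a = (x, z)" "x \<in> X0" "z \<in> Z1" unfolding EE_car by blast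
  then show "gE0 (a01 EE a) = a01 M (gE1 a)"
    using X0_c Z1_c NU_pdiv[OF a(2)] Z1_k[OF a(3)] by (simp add: EE_simps gE0_def gE1_def)
next
  fix a assume "a \<in> carrier (M0 EE)"
  then obtain x y where a: "a = (x, y)" "x \<in> X0" "y \<in> Y0" unfolding EE_car by blast
  then show "gE1 (a10 EE a) = a10 M (gE0 a)"
    using X0_c Y0_c Y0_k[OF a(3)] by (simp add: EE_simps gE0_def gE1_def)
next
  fix a assume "a \<in> carrier (M2 EE)"
  then obtain y z where a: "a = (y, z)" "y \<in> Y0" "z \<in> Z1" unfolding EE_car by blast
  then show "gE1 (a12 EE a) = a12 M (gE2 a)"
    using Y0_c Z1_c omZ[OF a(3)] by (simp add: EE_simps gE1_def gE2_def)
next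
  fix a assume "a \<in> carrier (M1 EE)"
  then obtain x z where a: "a = (x, z)" "x \<in> X0" "z \<in> Z1" unfolding EE_car by blast
  then show "gE2 (a21 EE a) = a21 M (gE1 a)"
    using X0_c Z1_c by (simp add: EE_simps gE1_def gE2_def)
next
  fix a assume "a \<in> carrier (M2 EE)"
  then obtain y z where a: "a = (y, z)" "y \<in> Y0" "z \<in> Z1" unfolding EE_car by blast
  then show "gE0 (a02 EE a) = a02 M (gE2 a)"
    using Y0_c Z1_c omY[OF a(2)] by (simp add: EE_simps gE0_def gE2_def)
next
  fix a assume "a \<in> carrier (M0 EE)"
  then obtain x y where a: "a = (x, y)" "x \<in> X0" "y \<in> Y0" unfolding EE_car by blast
  then show "gE2 (a20 EE a) = a20 M (gE0 a)"
    using X0_c Y0_c X0_k[OF a(2)] by (simp add: EE_simps gE0_def gE2_def)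
qed

lemma clE:
  "\<forall>y\<in>carrier (M1 EE). a01 EE y \<in> carrier (M0 EE)" "\<forall>y\<in>carrier (M0 EE). a10 EE y \<in> carrier (M1 EE)"
  "\<forall>y\<in>carrier (M2 EE). a12 EE y \<in> carrier (M1 EE)" "\<forall>y\<in>carrier (M1 EE). a21 EE y \<in> carrier (M2 EE)"
  "\<forall>y\<in>carrier (M2 EE). a02 EE y \<in> carrier (M0 EE)" "\<forall>y\<in>carrier (M0 EE). a20 EE y \<in> carrier (M2 EE)"
proof -
  have o0: "\<one>\<^bsub>M0 M\<^esub> \<in> X0" "\<one>\<^bsub>M0 M\<^esub> \<in> Y0" "\<one>\<^bsub>M1 M\<^esub> \<in> Z1"
    using subgroup.one_closed[OF X0_sub] subgroup.one_closed[OF Y0_sub] subgroup.one_closed[OF Z1_sub] by auto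
  show "\<forall>y\<in>carrier (M1 EE). a01 EE y \<in> carrier (M0 EE)" unfolding EE_car using o0 by (auto simp: EE_simps)
  show "\<forall>y\<in>carrier (M0 EE). a10 EE y \<in> carrier (M1 EE)" unfolding EE_car using o0 subgroup_pow_closed[OF X0_sub]
    by (auto simp: EE_simps)
  show "\<forall>y\<in>carrier (M2 EE). a12 EE y \<in> carrier (M1 EE)" unfolding EE_car using o0
    by (auto simp: EE_simps omZ Z1_def)
  show "\<forall>y\<in>carrier (M1 EE). a21 EE y \<in> carrier (M2 EE)" unfolding EE_car using o0 by (auto simp: EE_simps)
  show "\<forall>y\<in>carrier (M2 EE). a02 EE y \<in> carrier (M0 EE)" unfolding EE_car using o0
    by (auto simp: EE_simps omY Y0_def)
  show "\<forall>y\<in>carrier (M0 EE). a20 EE y \<in> carrier (M2 EE)" unfolding EE_car using o0 by (auto simp: EE_simps)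
qed

lemma kisoE: "kiso M EE"
  by (rule kiso_inv[OF gg0 gg1 gg2 EE_gg kmE _ _ _ clE]) (simp_all only: EE_car bij0 bij1 bij2)

end

lemma hexa_of:
  assumes "prime p" "kmodule p M" "exact_kmodule M"
  shows "hexa p (M0 M) (M1 M) (M2 M) (a01 M) (a10 M) (a12 M) (a21 M) (a02 M) (a20 M)"
proof -
  have gg: "graded_group (M0 M)" "graded_group (M1 M)" "graded_group (M2 M)"
    using assms(2) unfolding kmodule_def by auto
  have gr: "gpres (M1 M) (M0 M) (a01 M)" "gpres (M0 M) (M1 M) (a10 M)"
     "grev (M2 M) (M1 M) (a12 M)" "grev (M1 M) (M2 M) (a21 M)"
     "gpres (M2 M) (M0 M) (a02 M)" "gpres (M0 M) (M2 M) (a20 M)"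
    using assms(2) unfolding kmodule_def by auto
  show ?thesis
    unfolding hexa_def using assms gg_cg[OF gg(1)] gg_cg[OF gg(2)] gg_cg[OF gg(3)]
      gpres_hom[OF gr(1)] gpres_hom[OF gr(2)] grev_hom[OF gr(3)] grev_hom[OF gr(4)] gpres_hom[OF gr(5)] gpres_hom[OF gr(6)]
    unfolding kmodule_def exact_kmodule_def by blast
qed

lemma hexa_swap:
  assumes H: "hexa p G0 G1 G2 f01 f10 f12 f21 f02 f20"
  shows "hexa p G1 G0 G2 f10 f01 f02 f20 f12 f21"
proof -
  interpret hexa p G0 G1 G2 f01 f10 f12 f21 f02 f20 by fact
  have n2': "\<forall>x\<in>carrier G2. normop p G2 (one_minus G2 (f21 \<circ> f12)) x \<otimes>\<^bsub>G2\<^esub>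
        normop p G2 (one_minus G2 (f20 \<circ> f02)) x = x [^]\<^bsub>G2\<^esub> p"
  proof
    fix x assume x: "x \<in> carrier G2"
    have "normop p G2 (one_minus G2 (f21 \<circ> f12)) x \<otimes>\<^bsub>G2\<^esub> normop p G2 (one_minus G2 (f20 \<circ> f02)) x
      = normop p G2 (one_minus G2 (f20 \<circ> f02)) x \<otimes>\<^bsub>G2\<^esub> normop p G2 (one_minus G2 (f21 \<circ> f12)) x"
      using x by (simp add: g2.m_comm)
    also have "\<dots> = x [^]\<^bsub>G2\<^esub> p" using n2 x by blast
    finally show "normop p G2 (one_minus G2 (f21 \<circ> f12)) x \<otimes>\<^bsub>G2\<^esub>
        normop p G2 (one_minus G2 (f20 \<circ> f02)) x = x [^]\<^bsub>G2\<^esub> p" .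
  qed
  show ?thesis
    unfolding hexa_def using prime cg0 cg1 cg2 h01 h10 h12 h21 h02 h20 n0 n1 n2' e1 e2 e3 e4 e5 e6 by blast
qed

theorem theorem7p2:
  fixes p :: nat and M :: "('a, 'b, 'c) kmod"
  assumes "prime p" and "kmodule p M" and "exact_kmodule M"
    and "upd p (M0 M) \<or> upd p (M1 M) \<or> upd p (M2 M)"
  shows "upd p (M0 M) \<and> upd p (M1 M) \<and> upd p (M2 M) \<and>
    (\<exists>(X :: 'a gmonoid) (Y :: 'a gmonoid) thY (Z :: 'b gmonoid) thZ.
       zp_module p X \<and> zth_module p Y thY \<and> zth_module p Z thZ \<and>
       kiso M (Emod p X Y thY Z thZ))"
proof -
  have H: "hexa p (M0 M) (M1 M) (M2 M) (a01 M) (a10 M) (a12 M) (a21 M) (a02 M) (a20 M)"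
    using hexa_of assms(1-3) .
  have HS: "hexa p (M1 M) (M0 M) (M2 M) (a10 M) (a01 M) (a02 M) (a20 M) (a12 M) (a21 M)"
    using hexa_swap[OF H] .
  have u2: "upd p (M2 M)"
    using assms(4) hexa.A02[OF H] hexa.A02[OF HS] by blast
  have u0: "upd p (M0 M)" using hexa.A20[OF H u2] .
  have u1: "upd p (M1 M)" using hexa.A20[OF HS u2] .
  interpret kctx p M using assms(1-3) u0 u1 u2 by (simp add: kctx_def)
  have "zp_module p Xg \<and> zth_module p Yg thY \<and> zth_module p Zg thZ \<and> kiso M (Emod p Xg Yg thY Zg thZ)"
    using zpX zthY zthZ kisoE unfolding EE_def by blast
  then show ?thesis using u0 u1 u2 by blast
qed

end
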